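(* Let $p\in\{2,3,4\}$. Let $F,G:\mathbb{R}\to\mathbb{R}$ be of the form $$F=\overline F+\widetilde F+\varphi\widehat F,\qquad G=\overline G+\widetilde G+\varphi\widehat G,$$ where $\overline F,\overline G\in\mathcal Y$, $\overline F$ is odd and $\overline G$ is even, $\widetilde F$ and $\widehat G$ are odd polynomial functions, and $\widehat F$ and $\widetilde G$ are even polynomial functions. Then there exist $a\in\mathbb{R}$ and functions $$A=\overline A+\widetilde A+\varphi\widehat A,\qquad B=\overline B+\widetilde B+\varphi\widehat B,$$ with $\overline A,\overline B\in\mathcal Y$, $\overline A$ even, $\overline B$ odd, $\widetilde A$ and $\widehat B$ even polynomial functions, $\widehat A$ and $\widetilde B$ odd polynomial functions, satisfying $$(\mathcal LA)'+a(3Q-2Q^p)'=F,\qquad (\mathcal LB)'+3aQ''-3A''-pQ^{p-1}A=G,$$ and such that $$\deg\widetilde A\le1+\deg\widetilde F,\quad \deg\widetilde B\le\max(1+\deg\widetilde G,\deg\widetilde F),$$ $$\deg\widehat A\le1+\deg\widehat F,\quad \deg\widehat B\le\max(1+\deg\widehat G,\deg\widehat F).$$ Moreover: if $\widetilde F=0$ (respectively $\widehat F=0$) then $\widetilde A=0$ (respectively $\widehat A=0$); if $\widetilde A''=0$ and $\widetilde G=0$ then $\widetilde B=0$; if $\widehat A''=0$ and $\widehat G=0$ then $\deg\widehat B=0$.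
   Context: $Q$ is the unique even positive $H^1$ solution of $Q''+Q^p=Q$, i.e. $Q(x)=\big(\frac{p+1}{2\cosh^2(\frac{p-1}2x)}\big)^{1/(p-1)}$. $\mathcal L$ is the operator $\mathcal Lf=-f''+f-pQ^{p-1}f$. $\varphi(x)=-Q'(x)/Q(x)=\tanh(\frac{p-1}2x)$. $\mathcal Y$ denotes the set of $C^\infty$ functions $f$ on $\mathbb{R}$ such that for every $j\in\mathbb{N}$ there exist $K_j,r_j>0$ with $|f^{(j)}(x)|\le K_j(1+|x|)^{r_j}e^{-|x|}$ for all $x\in\mathbb{R}$. *)

theory Defs
  imports "HOL-Analysis.Analysis" "HOL-Computational_Algebra.Polynomial"
begin

definition Qp :: "nat \<Rightarrow> real \<Rightarrow> real" where
  "Qp p x = ((real p + 1) / (2 * (cosh ((real p - 1) / 2 * x))\<^sup>2)) powr (1 / (real p - 1))"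

definition phi :: "nat \<Rightarrow> real \<Rightarrow> real" where
  "phi p x = tanh ((real p - 1) / 2 * x)"

definition Lop :: "nat \<Rightarrow> (real \<Rightarrow> real) \<Rightarrow> real \<Rightarrow> real" where
  "Lop p f x = - deriv (deriv f) x + f x - real p * (Qp p x) ^ (p - 1) * f x"

definition classY :: "(real \<Rightarrow> real) \<Rightarrow> bool" where
  "classY f \<longleftrightarrow>
     (\<forall>j x. (deriv ^^ j) f differentiable at x) \<and>
     (\<forall>j. \<exists>K r. K > 0 \<and> r > 0 \<and>
        (\<forall>x. \<bar>(deriv ^^ j) f x\<bar> \<le> K * (1 + \<bar>x\<bar>) powr r * exp (- \<bar>x\<bar>)))"

definition odd_fun :: "(real \<Rightarrow> real) \<Rightarrow> bool" where
  "odd_fun f \<longleftrightarrow> (\<forall>x. f (- x) = - f x)"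

definition even_fun :: "(real \<Rightarrow> real) \<Rightarrow> bool" where
  "even_fun f \<longleftrightarrow> (\<forall>x. f (- x) = f x)"

end

theory Submission
  imports Defs "HOL-Real_Asymp.Real_Asymp"
begin


definition Dif :: "(real \<Rightarrow> real) \<Rightarrow> bool" where
  "Dif f \<longleftrightarrow> (\<forall>x. f differentiable at x)"
definition YB :: "(real \<Rightarrow> real) \<Rightarrow> bool" where
  "YB f \<longleftrightarrow> (\<exists>K N. \<forall>x. \<bar>f x\<bar> \<le> K * (1+\<bar>x\<bar>)^N * exp(-\<bar>x\<bar>))"
definition PB :: "(real \<Rightarrow> real) \<Rightarrow> bool" where
  "PB f \<longleftrightarrow> (\<exists>K N. \<forall>x. \<bar>f x\<bar> \<le> K * (1+\<bar>x\<bar>)^N)"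

fun Yn :: "nat \<Rightarrow> (real \<Rightarrow> real) \<Rightarrow> bool" where
  "Yn 0 f = (Dif f \<and> YB f)"
| "Yn (Suc m) f = (Dif f \<and> YB f \<and> Yn m (deriv f))"
fun Pn :: "nat \<Rightarrow> (real \<Rightarrow> real) \<Rightarrow> bool" where
  "Pn 0 f = (Dif f \<and> PB f)"
| "Pn (Suc m) f = (Dif f \<and> PB f \<and> Pn m (deriv f))"
fun Cn :: "nat \<Rightarrow> (real \<Rightarrow> real) \<Rightarrow> bool" where
  "Cn 0 f = Dif f"
| "Cn (Suc m) f = (Dif f \<and> Cn m (deriv f))"

definition "Yc f \<longleftrightarrow> (\<forall>m. Yn m f)"
definition "Pc f \<longleftrightarrow> (\<forall>m. Pn m f)"
definition "Sm f \<longleftrightarrow> (\<forall>m. Cn m f)"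

lemma Dif_D: "Dif f \<Longrightarrow> (f has_real_derivative deriv f x) (at x)"
  unfolding Dif_def using DERIV_deriv_iff_real_differentiable by blast

lemma Dif_I: "(\<And>x. (f has_real_derivative f' x) (at x)) \<Longrightarrow> Dif f"
  unfolding Dif_def using real_differentiable_def by blast

lemma deriv_eqI: "(\<And>x. (f has_real_derivative f' x) (at x)) \<Longrightarrow> deriv f = f'"
  using DERIV_imp_deriv by blast

lemma Dif_add[intro]: "Dif f \<Longrightarrow> Dif g \<Longrightarrow> Dif (\<lambda>x. f x + g x)"
  by (rule Dif_I, rule derivative_intros, erule Dif_D, erule Dif_D)
lemma Dif_diff[intro]: "Dif f \<Longrightarrow> Dif g \<Longrightarrow> Dif (\<lambda>x. f x - g x)"
  by (rule Dif_I, rule derivative_intros, erule Dif_D, erule Dif_D)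
lemma Dif_mult[intro]: "Dif f \<Longrightarrow> Dif g \<Longrightarrow> Dif (\<lambda>x. f x * g x)"
  by (rule Dif_I, rule derivative_intros, erule Dif_D, erule Dif_D)
lemma Dif_cmult[intro]: "Dif f \<Longrightarrow> Dif (\<lambda>x. c * f x)"
  by (rule Dif_I, rule DERIV_cmult, erule Dif_D)
lemma Dif_minus[intro]: "Dif f \<Longrightarrow> Dif (\<lambda>x. - f x)"
  by (rule Dif_I, rule derivative_intros, erule Dif_D)
lemma Dif_const[intro]: "Dif (\<lambda>x. c)"
  by (rule Dif_I, rule derivative_intros)

lemma deriv_add_fun: "Dif f \<Longrightarrow> Dif g \<Longrightarrow> deriv (\<lambda>x. f x + g x) = (\<lambda>x. deriv f x + deriv g x)"
  by (rule deriv_eqI, rule derivative_intros, erule Dif_D, erule Dif_D)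
lemma deriv_diff_fun: "Dif f \<Longrightarrow> Dif g \<Longrightarrow> deriv (\<lambda>x. f x - g x) = (\<lambda>x. deriv f x - deriv g x)"
  by (rule deriv_eqI, rule derivative_intros, erule Dif_D, erule Dif_D)
lemma deriv_mult_fun: "Dif f \<Longrightarrow> Dif g \<Longrightarrow>
   deriv (\<lambda>x. f x * g x) = (\<lambda>x. deriv f x * g x + f x * deriv g x)"
  by (rule deriv_eqI, rule derivative_eq_intros, erule Dif_D, erule Dif_D, simp)
lemma deriv_cmult_fun: "Dif f \<Longrightarrow> deriv (\<lambda>x. c * f x) = (\<lambda>x. c * deriv f x)"
  by (rule deriv_eqI, rule DERIV_cmult, erule Dif_D)
lemma deriv_minus_fun: "Dif f \<Longrightarrow> deriv (\<lambda>x. - f x) = (\<lambda>x. - deriv f x)"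
  by (rule deriv_eqI, rule derivative_eq_intros, erule Dif_D, simp)
lemma deriv_const_fun: "deriv (\<lambda>x. c) = (\<lambda>x. 0::real)"
  by (rule deriv_eqI, rule derivative_eq_intros, simp)

lemma wpos: "(0::real) < 1 + \<bar>x\<bar>" by simp
lemma wge1: "(1::real) \<le> 1 + \<bar>x\<bar>" by simp

lemma YB_add: assumes "YB f" "YB g" shows "YB (\<lambda>x. f x + g x)"
proof -
  obtain K1 N1 where 1: "\<And>x. \<bar>f x\<bar> \<le> K1 * (1+\<bar>x\<bar>)^N1 * exp(-\<bar>x\<bar>)" using assms(1) YB_def by auto
  obtain K2 N2 where 2: "\<And>x. \<bar>g x\<bar> \<le> K2 * (1+\<bar>x\<bar>)^N2 * exp(-\<bar>x\<bar>)" using assms(2) YB_def by auto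
  have "\<bar>f x + g x\<bar> \<le> (\<bar>K1\<bar>+\<bar>K2\<bar>) * (1+\<bar>x\<bar>)^(N1+N2) * exp(-\<bar>x\<bar>)" for x
  proof -
    have a: "(1+\<bar>x\<bar>)^N1 \<le> (1+\<bar>x\<bar>)^(N1+N2)" "(1+\<bar>x\<bar>)^N2 \<le> (1+\<bar>x\<bar>)^(N1+N2)"
      by (auto intro: power_increasing)
    have "K1 * (1+\<bar>x\<bar>)^N1 \<le> \<bar>K1\<bar> * (1+\<bar>x\<bar>)^(N1+N2)"
      by (rule order.trans[of _ "\<bar>K1\<bar> * (1+\<bar>x\<bar>)^N1"]) (auto intro!: mult_left_mono a)
    then have A: "K1 * (1+\<bar>x\<bar>)^N1 * exp(-\<bar>x\<bar>) \<le> \<bar>K1\<bar> * (1+\<bar>x\<bar>)^(N1+N2) * exp(-\<bar>x\<bar>)"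
      by (rule mult_right_mono) auto
    have "K2 * (1+\<bar>x\<bar>)^N2 \<le> \<bar>K2\<bar> * (1+\<bar>x\<bar>)^(N1+N2)"
      by (rule order.trans[of _ "\<bar>K2\<bar> * (1+\<bar>x\<bar>)^N2"]) (auto intro!: mult_left_mono a)
    then have B: "K2 * (1+\<bar>x\<bar>)^N2 * exp(-\<bar>x\<bar>) \<le> \<bar>K2\<bar> * (1+\<bar>x\<bar>)^(N1+N2) * exp(-\<bar>x\<bar>)"
      by (rule mult_right_mono) auto
    have C: "(\<bar>K1\<bar>+\<bar>K2\<bar>) * (1+\<bar>x\<bar>)^(N1+N2) * exp(-\<bar>x\<bar>) = \<bar>K1\<bar> * (1+\<bar>x\<bar>)^(N1+N2) * exp(-\<bar>x\<bar>) + \<bar>K2\<bar> * (1+\<bar>x\<bar>)^(N1+N2) * exp(-\<bar>x\<bar>)"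
      by (simp add: algebra_simps)
    show ?thesis using 1[of x] 2[of x] A B C abs_triangle_ineq[of "f x" "g x"] by linarith
  qed
  then show ?thesis unfolding YB_def by blast
qed

lemma PB_add: assumes "PB f" "PB g" shows "PB (\<lambda>x. f x + g x)"
proof -
  obtain K1 N1 where 1: "\<And>x. \<bar>f x\<bar> \<le> K1 * (1+\<bar>x\<bar>)^N1" using assms(1) PB_def by auto
  obtain K2 N2 where 2: "\<And>x. \<bar>g x\<bar> \<le> K2 * (1+\<bar>x\<bar>)^N2" using assms(2) PB_def by auto
  have "\<bar>f x + g x\<bar> \<le> (\<bar>K1\<bar>+\<bar>K2\<bar>) * (1+\<bar>x\<bar>)^(N1+N2)" for x
  proof -
    have a: "(1+\<bar>x\<bar>)^N1 \<le> (1+\<bar>x\<bar>)^(N1+N2)" "(1+\<bar>x\<bar>)^N2 \<le> (1+\<bar>x\<bar>)^(N1+N2)"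
      by (auto intro: power_increasing)
    have "K1 * (1+\<bar>x\<bar>)^N1 \<le> \<bar>K1\<bar> * (1+\<bar>x\<bar>)^(N1+N2)"
      by (rule order.trans[of _ "\<bar>K1\<bar> * (1+\<bar>x\<bar>)^N1"]) (auto intro!: mult_left_mono a)
    moreover have "K2 * (1+\<bar>x\<bar>)^N2 \<le> \<bar>K2\<bar> * (1+\<bar>x\<bar>)^(N1+N2)"
      by (rule order.trans[of _ "\<bar>K2\<bar> * (1+\<bar>x\<bar>)^N2"]) (auto intro!: mult_left_mono a)
    moreover have C: "(\<bar>K1\<bar>+\<bar>K2\<bar>) * (1+\<bar>x\<bar>)^(N1+N2) = \<bar>K1\<bar> * (1+\<bar>x\<bar>)^(N1+N2) + \<bar>K2\<bar> * (1+\<bar>x\<bar>)^(N1+N2)"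
      by (simp add: algebra_simps)
    ultimately show ?thesis using 1[of x] 2[of x] abs_triangle_ineq[of "f x" "g x"] by linarith
  qed
  then show ?thesis unfolding PB_def by blast
qed

lemma YB_cmult: "YB f \<Longrightarrow> YB (\<lambda>x. c * f x)"
proof -
  assume "YB f"
  then obtain K N where 1: "\<And>x. \<bar>f x\<bar> \<le> K * (1+\<bar>x\<bar>)^N * exp(-\<bar>x\<bar>)" using YB_def by auto
  have "\<bar>c * f x\<bar> \<le> (\<bar>c\<bar>*K) * (1+\<bar>x\<bar>)^N * exp(-\<bar>x\<bar>)" for x
    using mult_left_mono[OF 1[of x], of "\<bar>c\<bar>"] by (simp add: abs_mult mult.assoc)
  then show ?thesis unfolding YB_def by blast
qed

lemma PB_cmult: "PB f \<Longrightarrow> PB (\<lambda>x. c * f x)"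
proof -
  assume "PB f"
  then obtain K N where 1: "\<And>x. \<bar>f x\<bar> \<le> K * (1+\<bar>x\<bar>)^N" using PB_def by auto
  have "\<bar>c * f x\<bar> \<le> (\<bar>c\<bar>*K) * (1+\<bar>x\<bar>)^N" for x
    using mult_left_mono[OF 1[of x], of "\<bar>c\<bar>"] by (simp add: abs_mult mult.assoc)
  then show ?thesis unfolding PB_def by blast
qed

lemma YB_mult: assumes "YB f" "PB g" shows "YB (\<lambda>x. f x * g x)"
proof -
  obtain K1 N1 where 1: "\<And>x. \<bar>f x\<bar> \<le> K1 * (1+\<bar>x\<bar>)^N1 * exp(-\<bar>x\<bar>)" using assms(1) YB_def by auto
  obtain K2 N2 where 2: "\<And>x. \<bar>g x\<bar> \<le> K2 * (1+\<bar>x\<bar>)^N2" using assms(2) PB_def by auto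
  have "\<bar>f x * g x\<bar> \<le> (K1*K2) * (1+\<bar>x\<bar>)^(N1+N2) * exp(-\<bar>x\<bar>)" for x
  proof -
    have "\<bar>f x * g x\<bar> = \<bar>f x\<bar> * \<bar>g x\<bar>" by (simp add: abs_mult)
    also have "\<dots> \<le> (K1 * (1+\<bar>x\<bar>)^N1 * exp(-\<bar>x\<bar>)) * (K2 * (1+\<bar>x\<bar>)^N2)"
      by (rule mult_mono[OF 1 2]) (auto intro: order.trans[OF abs_ge_zero 1])
    finally show ?thesis by (simp add: power_add algebra_simps)
  qed
  then show ?thesis unfolding YB_def by blast
qed

lemma PB_mult: assumes "PB f" "PB g" shows "PB (\<lambda>x. f x * g x)"
proof -
  obtain K1 N1 where 1: "\<And>x. \<bar>f x\<bar> \<le> K1 * (1+\<bar>x\<bar>)^N1" using assms(1) PB_def by auto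
  obtain K2 N2 where 2: "\<And>x. \<bar>g x\<bar> \<le> K2 * (1+\<bar>x\<bar>)^N2" using assms(2) PB_def by auto
  have "\<bar>f x * g x\<bar> \<le> (K1*K2) * (1+\<bar>x\<bar>)^(N1+N2)" for x
  proof -
    have "\<bar>f x * g x\<bar> = \<bar>f x\<bar> * \<bar>g x\<bar>" by (simp add: abs_mult)
    also have "\<dots> \<le> (K1 * (1+\<bar>x\<bar>)^N1) * (K2 * (1+\<bar>x\<bar>)^N2)"
      by (rule mult_mono[OF 1 2]) (auto intro: order.trans[OF abs_ge_zero 1])
    finally show ?thesis by (simp add: power_add algebra_simps)
  qed
  then show ?thesis unfolding PB_def by blast
qed

lemma YB_PB: "YB f \<Longrightarrow> PB f"
proof -
  assume "YB f"
  then obtain K N where 1: "\<And>x. \<bar>f x\<bar> \<le> K * (1+\<bar>x\<bar>)^N * exp(-\<bar>x\<bar>)" using YB_def by auto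
  have "\<bar>f x\<bar> \<le> \<bar>K\<bar> * (1+\<bar>x\<bar>)^N" for x
  proof -
    have "K * (1+\<bar>x\<bar>)^N * exp(-\<bar>x\<bar>) \<le> \<bar>K\<bar> * (1+\<bar>x\<bar>)^N * exp(-\<bar>x\<bar>)"
      by (intro mult_right_mono) auto
    also have "\<dots> \<le> \<bar>K\<bar> * (1+\<bar>x\<bar>)^N"
      using mult_left_mono[of "exp(-\<bar>x\<bar>)" 1 "\<bar>K\<bar> * (1+\<bar>x\<bar>)^N"] by simp
    finally show ?thesis using 1[of x] by linarith
  qed
  then show ?thesis unfolding PB_def by blast
qed

lemma PB_const: "PB (\<lambda>x. c)"
  unfolding PB_def by (rule exI[of _ "\<bar>c\<bar>"], rule exI[of _ 0]) simp

lemma YB_cong: "YB f \<Longrightarrow> (\<And>x. g x = f x) \<Longrightarrow> YB g" by (metis ext)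


lemma Yn_Dif: "Yn m f \<Longrightarrow> Dif f" by (cases m) auto
lemma Yn_YB: "Yn m f \<Longrightarrow> YB f" by (cases m) auto
lemma Pn_Dif: "Pn m f \<Longrightarrow> Dif f" by (cases m) auto
lemma Pn_PB: "Pn m f \<Longrightarrow> PB f" by (cases m) auto
lemma Cn_Dif: "Cn m f \<Longrightarrow> Dif f" by (cases m) auto

lemma Yn_mono: "Yn (Suc m) f \<Longrightarrow> Yn m f"
  by (induction m arbitrary: f) auto
lemma Pn_mono: "Pn (Suc m) f \<Longrightarrow> Pn m f"
  by (induction m arbitrary: f) auto
lemma Cn_mono: "Cn (Suc m) f \<Longrightarrow> Cn m f"
  by (induction m arbitrary: f) auto
lemma Yn_mono_add: "Yn (n + d) f \<Longrightarrow> Yn n f"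
proof (induction d)
  case (Suc d) then show ?case by (metis Yn_mono add_Suc_right)
qed simp
lemma Yn_mono': "Yn m f \<Longrightarrow> n \<le> m \<Longrightarrow> Yn n f"
  by (metis le_Suc_ex Yn_mono_add)
lemma Pn_mono_add: "Pn (n + d) f \<Longrightarrow> Pn n f"
proof (induction d)
  case (Suc d) then show ?case by (metis Pn_mono add_Suc_right)
qed simp
lemma Pn_mono': "Pn m f \<Longrightarrow> n \<le> m \<Longrightarrow> Pn n f"
  by (metis le_Suc_ex Pn_mono_add)
lemma Cn_mono_add: "Cn (n + d) f \<Longrightarrow> Cn n f"
proof (induction d)
  case (Suc d) then show ?case by (metis Cn_mono add_Suc_right)
qed simp
lemma Cn_mono': "Cn m f \<Longrightarrow> n \<le> m \<Longrightarrow> Cn n f"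
  by (metis le_Suc_ex Cn_mono_add)

lemma Yn_Pn: "Yn m f \<Longrightarrow> Pn m f"
  by (induction m arbitrary: f) (auto intro: YB_PB)
lemma Pn_Cn: "Pn m f \<Longrightarrow> Cn m f"
  by (induction m arbitrary: f) auto
lemma Yn_Cn: "Yn m f \<Longrightarrow> Cn m f"
  using Yn_Pn Pn_Cn by blast

lemma Yn_add: "Yn m f \<Longrightarrow> Yn m g \<Longrightarrow> Yn m (\<lambda>x. f x + g x)"
  by (induction m arbitrary: f g) (auto simp: deriv_add_fun YB_add)
lemma Pn_add: "Pn m f \<Longrightarrow> Pn m g \<Longrightarrow> Pn m (\<lambda>x. f x + g x)"
  by (induction m arbitrary: f g) (auto simp: deriv_add_fun PB_add)
lemma Cn_add: "Cn m f \<Longrightarrow> Cn m g \<Longrightarrow> Cn m (\<lambda>x. f x + g x)"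
  by (induction m arbitrary: f g) (auto simp: deriv_add_fun)
lemma Yn_cmult: "Yn m f \<Longrightarrow> Yn m (\<lambda>x. c * f x)"
  by (induction m arbitrary: f) (auto simp: deriv_cmult_fun YB_cmult)
lemma Pn_cmult: "Pn m f \<Longrightarrow> Pn m (\<lambda>x. c * f x)"
  by (induction m arbitrary: f) (auto simp: deriv_cmult_fun PB_cmult)
lemma Cn_cmult: "Cn m f \<Longrightarrow> Cn m (\<lambda>x. c * f x)"
  by (induction m arbitrary: f) (auto simp: deriv_cmult_fun)

lemma Yn_mult: "Yn m f \<Longrightarrow> Pn m g \<Longrightarrow> Yn m (\<lambda>x. f x * g x)"
proof (induction m arbitrary: f g)
  case 0 then show ?case by (auto intro: YB_mult)
next
  case (Suc m)
  have "Yn m (\<lambda>x. deriv f x * g x + f x * deriv g x)"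
    using Suc.prems Yn_mono[OF Suc.prems(1)] Pn_mono[OF Suc.prems(2)] by (intro Yn_add Suc.IH) auto
  then show ?case using Suc.prems by (auto simp: deriv_mult_fun intro: YB_mult)
qed
lemma Pn_mult: "Pn m f \<Longrightarrow> Pn m g \<Longrightarrow> Pn m (\<lambda>x. f x * g x)"
proof (induction m arbitrary: f g)
  case 0 then show ?case by (auto intro: PB_mult)
next
  case (Suc m)
  have "Pn m (\<lambda>x. deriv f x * g x + f x * deriv g x)"
    using Suc.prems Pn_mono[OF Suc.prems(1)] Pn_mono[OF Suc.prems(2)] by (intro Pn_add Suc.IH) auto
  then show ?case using Suc.prems by (auto simp: deriv_mult_fun intro: PB_mult)
qed
lemma Cn_mult: "Cn m f \<Longrightarrow> Cn m g \<Longrightarrow> Cn m (\<lambda>x. f x * g x)"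
proof (induction m arbitrary: f g)
  case 0 then show ?case by auto
next
  case (Suc m)
  have "Cn m (\<lambda>x. deriv f x * g x + f x * deriv g x)"
    using Suc.prems Cn_mono[OF Suc.prems(1)] Cn_mono[OF Suc.prems(2)] by (intro Cn_add Suc.IH) auto
  then show ?case using Suc.prems by (auto simp: deriv_mult_fun)
qed

lemma Yn_minus: "Yn m f \<Longrightarrow> Yn m (\<lambda>x. - f x)"
  using Yn_cmult[of m f "-1"] by simp
lemma Pn_minus: "Pn m f \<Longrightarrow> Pn m (\<lambda>x. - f x)"
  using Pn_cmult[of m f "-1"] by simp
lemma Cn_minus: "Cn m f \<Longrightarrow> Cn m (\<lambda>x. - f x)"
  using Cn_cmult[of m f "-1"] by simp
lemma Yn_diff: "Yn m f \<Longrightarrow> Yn m g \<Longrightarrow> Yn m (\<lambda>x. f x - g x)"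
  using Yn_add[OF _ Yn_minus, of m f g] by simp
lemma Pn_diff: "Pn m f \<Longrightarrow> Pn m g \<Longrightarrow> Pn m (\<lambda>x. f x - g x)"
  using Pn_add[OF _ Pn_minus, of m f g] by simp
lemma Cn_diff: "Cn m f \<Longrightarrow> Cn m g \<Longrightarrow> Cn m (\<lambda>x. f x - g x)"
  using Cn_add[OF _ Cn_minus, of m f g] by simp

lemma Pn_const: "Pn m (\<lambda>x. c)"
  by (induction m arbitrary: c) (auto simp: deriv_const_fun PB_const)

lemma Yc_add: "Yc f \<Longrightarrow> Yc g \<Longrightarrow> Yc (\<lambda>x. f x + g x)" unfolding Yc_def by (auto intro: Yn_add)
lemma Yc_diff: "Yc f \<Longrightarrow> Yc g \<Longrightarrow> Yc (\<lambda>x. f x - g x)" unfolding Yc_def by (auto intro: Yn_diff)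
lemma Yc_cmult: "Yc f \<Longrightarrow> Yc (\<lambda>x. c * f x)" unfolding Yc_def by (auto intro: Yn_cmult)
lemma Yc_minus: "Yc f \<Longrightarrow> Yc (\<lambda>x. - f x)" unfolding Yc_def by (auto intro: Yn_minus)
lemma Yc_mult: "Yc f \<Longrightarrow> Pc g \<Longrightarrow> Yc (\<lambda>x. f x * g x)" unfolding Yc_def Pc_def by (auto intro: Yn_mult)
lemma Yc_mult': "Pc g \<Longrightarrow> Yc f \<Longrightarrow> Yc (\<lambda>x. g x * f x)"
  using Yc_mult[of f g] by (simp add: mult.commute)
lemma Pc_add: "Pc f \<Longrightarrow> Pc g \<Longrightarrow> Pc (\<lambda>x. f x + g x)" unfolding Pc_def by (auto intro: Pn_add)
lemma Pc_diff: "Pc f \<Longrightarrow> Pc g \<Longrightarrow> Pc (\<lambda>x. f x - g x)" unfolding Pc_def by (auto intro: Pn_diff)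
lemma Pc_cmult: "Pc f \<Longrightarrow> Pc (\<lambda>x. c * f x)" unfolding Pc_def by (auto intro: Pn_cmult)
lemma Pc_minus: "Pc f \<Longrightarrow> Pc (\<lambda>x. - f x)" unfolding Pc_def by (auto intro: Pn_minus)
lemma Pc_mult: "Pc f \<Longrightarrow> Pc g \<Longrightarrow> Pc (\<lambda>x. f x * g x)" unfolding Pc_def by (auto intro: Pn_mult)
lemma Pc_const: "Pc (\<lambda>x. c)" unfolding Pc_def by (auto intro: Pn_const)
lemma Yc_Pc: "Yc f \<Longrightarrow> Pc f" unfolding Yc_def Pc_def by (auto intro: Yn_Pn)
lemma Sm_add: "Sm f \<Longrightarrow> Sm g \<Longrightarrow> Sm (\<lambda>x. f x + g x)" unfolding Sm_def by (auto intro: Cn_add)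
lemma Sm_diff: "Sm f \<Longrightarrow> Sm g \<Longrightarrow> Sm (\<lambda>x. f x - g x)" unfolding Sm_def by (auto intro: Cn_diff)
lemma Sm_mult: "Sm f \<Longrightarrow> Sm g \<Longrightarrow> Sm (\<lambda>x. f x * g x)" unfolding Sm_def by (auto intro: Cn_mult)
lemma Sm_cmult: "Sm f \<Longrightarrow> Sm (\<lambda>x. c * f x)" unfolding Sm_def by (auto intro: Cn_cmult)
lemma Pc_Sm: "Pc f \<Longrightarrow> Sm f" unfolding Pc_def Sm_def by (auto intro: Pn_Cn)
lemma Yc_Sm: "Yc f \<Longrightarrow> Sm f" using Yc_Pc Pc_Sm by blast

lemma Yc_deriv: "Yc f \<Longrightarrow> Yc (deriv f)" unfolding Yc_def by (metis Yn.simps(2))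
lemma Pc_deriv: "Pc f \<Longrightarrow> Pc (deriv f)" unfolding Pc_def by (metis Pn.simps(2))
lemma Sm_deriv: "Sm f \<Longrightarrow> Sm (deriv f)" unfolding Sm_def by (metis Cn.simps(2))
lemma Yc_Dif: "Yc f \<Longrightarrow> Dif f" unfolding Yc_def using Yn_Dif by blast
lemma Pc_Dif: "Pc f \<Longrightarrow> Dif f" unfolding Pc_def using Pn_Dif by blast
lemma Sm_Dif: "Sm f \<Longrightarrow> Dif f" unfolding Sm_def using Cn_Dif by blast
lemma Yc_YB: "Yc f \<Longrightarrow> YB f" unfolding Yc_def using Yn_YB by blast
lemma Pc_PB: "Pc f \<Longrightarrow> PB f" unfolding Pc_def using Pn_PB by blast

lemma Yc_I: "Dif f \<Longrightarrow> YB f \<Longrightarrow> Yc (deriv f) \<Longrightarrow> Yc f"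
  unfolding Yc_def by (metis Yn.elims(3) Yn.simps(2) Yn_mono)
lemma Pc_I: "Dif f \<Longrightarrow> PB f \<Longrightarrow> Pc (deriv f) \<Longrightarrow> Pc f"
  unfolding Pc_def by (metis Pn.elims(3) Pn.simps(2) Pn_mono)
lemma Sm_I: "Dif f \<Longrightarrow> Sm (deriv f) \<Longrightarrow> Sm f"
  unfolding Sm_def by (metis Cn.elims(3) Cn.simps(2) Cn_mono)

lemma Yc_cong: "Yc f \<Longrightarrow> (\<And>x. g x = f x) \<Longrightarrow> Yc g" by (metis ext)
lemma Pc_cong: "Pc f \<Longrightarrow> (\<And>x. g x = f x) \<Longrightarrow> Pc g" by (metis ext)
lemma Sm_cong: "Sm f \<Longrightarrow> (\<And>x. g x = f x) \<Longrightarrow> Sm g" by (metis ext)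

lemma Yn_iff: "Yn m f \<longleftrightarrow> (\<forall>j\<le>m. Dif ((deriv^^j) f) \<and> YB ((deriv^^j) f))"
proof (induction m arbitrary: f)
  case 0 then show ?case by auto
next
  case (Suc m)
  have e: "(deriv^^(Suc j)) f = (deriv^^j) (deriv f)" for j by (simp add: funpow_Suc_right del: funpow.simps)
  show ?case
  proof
    assume "Yn (Suc m) f"
    then show "\<forall>j\<le>Suc m. Dif ((deriv ^^ j) f) \<and> YB ((deriv ^^ j) f)"
      using Suc.IH[of "deriv f"] by (auto simp: le_Suc_eq e simp del: funpow.simps) (metis e le_Suc_eq not0_implies_Suc le_0_eq Suc_le_mono funpow_0)+
  next
    assume a: "\<forall>j\<le>Suc m. Dif ((deriv ^^ j) f) \<and> YB ((deriv ^^ j) f)"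
    have "Yn m (deriv f)" using a Suc.IH[of "deriv f"] by (metis Suc_le_mono e)
    then show "Yn (Suc m) f" using a[rule_format, of 0] by simp
  qed
qed

lemma classY_Yc: "classY f \<longleftrightarrow> Yc f"
proof
  assume c: "classY f"
  have "YB ((deriv^^j) f)" for j
  proof -
    obtain K r where Kr: "K > 0" "r > 0" "\<And>x. \<bar>(deriv ^^ j) f x\<bar> \<le> K * (1 + \<bar>x\<bar>) powr r * exp (- \<bar>x\<bar>)"
      using c unfolding classY_def by blast
    have "\<bar>(deriv ^^ j) f x\<bar> \<le> K * (1 + \<bar>x\<bar>) ^ (nat \<lceil>r\<rceil>) * exp (- \<bar>x\<bar>)" for x
    proof -
      have "(1 + \<bar>x\<bar>) powr r \<le> (1 + \<bar>x\<bar>) powr (real (nat \<lceil>r\<rceil>))"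
        by (rule powr_mono) (auto simp: real_nat_ceiling_ge)
      also have "\<dots> = (1 + \<bar>x\<bar>) ^ (nat \<lceil>r\<rceil>)" by (simp add: powr_realpow)
      finally show ?thesis using Kr(1) Kr(3)[of x] by (smt (verit) exp_gt_zero mult_left_mono mult_right_mono)
    qed
    then show ?thesis unfolding YB_def by blast
  qed
  moreover have "Dif ((deriv^^j) f)" for j using c unfolding classY_def Dif_def by blast
  ultimately show "Yc f" unfolding Yc_def Yn_iff by blast
next
  assume y: "Yc f"
  have "Dif ((deriv^^j) f) \<and> YB ((deriv^^j) f)" for j using y unfolding Yc_def Yn_iff by blast
  then have d: "\<forall>j x. (deriv ^^ j) f differentiable at x" unfolding Dif_def by blast
  have "\<exists>K r. K > 0 \<and> r > 0 \<and> (\<forall>x. \<bar>(deriv ^^ j) f x\<bar> \<le> K * (1 + \<bar>x\<bar>) powr r * exp (- \<bar>x\<bar>))" for j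
  proof -
    obtain K N where KN: "\<And>x. \<bar>(deriv^^j) f x\<bar> \<le> K * (1+\<bar>x\<bar>)^N * exp(-\<bar>x\<bar>)"
      using \<open>\<And>j. Dif ((deriv^^j) f) \<and> YB ((deriv^^j) f)\<close>[of j] unfolding YB_def by blast
    have "\<bar>(deriv^^j) f x\<bar> \<le> (\<bar>K\<bar>+1) * (1+\<bar>x\<bar>) powr (real N + 1) * exp(-\<bar>x\<bar>)" for x
    proof -
      have "(1+\<bar>x\<bar>)^N = (1+\<bar>x\<bar>) powr (real N)" by (simp add: powr_realpow)
      also have "\<dots> \<le> (1+\<bar>x\<bar>) powr (real N + 1)" by (rule powr_mono) auto
      finally have "(1+\<bar>x\<bar>)^N \<le> (1+\<bar>x\<bar>) powr (real N + 1)" .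
      then have "K * (1+\<bar>x\<bar>)^N \<le> (\<bar>K\<bar>+1) * (1+\<bar>x\<bar>) powr (real N + 1)"
        by (smt (verit) mult_mono zero_le_power wpos powr_ge_zero)
      then show ?thesis using KN[of x] by (smt (verit) exp_gt_zero mult_right_mono)
    qed
    then show ?thesis by (intro exI[of _ "\<bar>K\<bar>+1"] exI[of _ "real N + 1"]) auto
  qed
  then show "classY f" unfolding classY_def using d by blast
qed


lemma poly_bound1: "\<bar>t::real\<bar> \<le> 1 \<Longrightarrow> \<bar>poly R t\<bar> \<le> (\<Sum>i\<le>degree R. \<bar>coeff R i\<bar>)"
proof -
  assume t: "\<bar>t\<bar> \<le> 1"
  have "\<bar>poly R t\<bar> \<le> (\<Sum>i\<le>degree R. \<bar>coeff R i * t ^ i\<bar>)"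
    unfolding poly_altdef by (rule sum_abs)
  also have "\<dots> \<le> (\<Sum>i\<le>degree R. \<bar>coeff R i\<bar>)"
  proof (rule sum_mono)
    fix i have "\<bar>t\<bar>^i \<le> 1" using t by (simp add: power_le_one)
    then show "\<bar>coeff R i * t ^ i\<bar> \<le> \<bar>coeff R i\<bar>"
      by (simp add: abs_mult power_abs mult_left_le)
  qed
  finally show ?thesis .
qed

lemma poly_boundw: "\<bar>poly R (t::real)\<bar> \<le> (\<Sum>i\<le>degree R. \<bar>coeff R i\<bar>) * (1+\<bar>t\<bar>)^degree R"
proof -
  have "\<bar>poly R t\<bar> \<le> (\<Sum>i\<le>degree R. \<bar>coeff R i * t ^ i\<bar>)"
    unfolding poly_altdef by (rule sum_abs)
  also have "\<dots> \<le> (\<Sum>i\<le>degree R. \<bar>coeff R i\<bar> * (1+\<bar>t\<bar>)^degree R)"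
  proof (rule sum_mono)
    fix i assume i: "i \<in> {..degree R}"
    have "\<bar>t\<bar>^i \<le> (1+\<bar>t\<bar>)^i" by (rule power_mono) auto
    also have "\<dots> \<le> (1+\<bar>t\<bar>)^degree R" using i by (intro power_increasing) auto
    finally show "\<bar>coeff R i * t ^ i\<bar> \<le> \<bar>coeff R i\<bar> * (1+\<bar>t\<bar>)^degree R"
      by (simp add: abs_mult power_abs mult_left_mono)
  qed
  also have "\<dots> = (\<Sum>i\<le>degree R. \<bar>coeff R i\<bar>) * (1+\<bar>t\<bar>)^degree R"
    by (simp add: sum_distrib_right)
  finally show ?thesis .
qed

lemma deriv_poly_fun: "deriv (poly (P::real poly)) = poly (pderiv P)"
  by (rule deriv_eqI) (rule poly_DERIV)
lemma Dif_poly: "Dif (poly (P::real poly))"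
  by (rule Dif_I) (rule poly_DERIV)
lemma PB_poly: "PB (poly (P::real poly))"
  unfolding PB_def using poly_boundw by blast
lemma Pc_poly: "Pc (poly (P::real poly))"
proof -
  have "\<forall>P. Pn m (poly P)" for m
    by (induction m) (auto simp: Dif_poly PB_poly deriv_poly_fun)
  then show ?thesis unfolding Pc_def by blast
qed

section \<open>Functions of the form E * R(phi)\<close>

lemma family_deriv:
  assumes ph: "\<And>x. (ph has_real_derivative k * (1 - ph x ^ 2)) (at x)"
    and E: "\<And>x. (E has_real_derivative E x * poly e (ph x)) (at x)"
  shows "((\<lambda>x. E x * poly R (ph x)) has_real_derivative
            E x * poly (e * R + pderiv R * [:k, 0, -k:]) (ph x)) (at x)"
proof -
  have "((\<lambda>x. E x * poly R (ph x)) has_real_derivative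
     E x * poly e (ph x) * poly R (ph x) + (poly (pderiv R) (ph x) * (k * (1 - ph x ^ 2))) * E x) (at x)"
    by (rule DERIV_mult[OF E DERIV_chain2[OF poly_DERIV ph]])
  moreover have "E x * poly e (ph x) * poly R (ph x) + (poly (pderiv R) (ph x) * (k * (1 - ph x ^ 2))) * E x
     = E x * poly (e * R + pderiv R * [:k, 0, -k:]) (ph x)"
    by (simp add: algebra_simps power2_eq_square)
  ultimately show ?thesis by simp
qed

lemma family_Sm:
  assumes ph: "\<And>x. (ph has_real_derivative k * (1 - ph x ^ 2)) (at x)"
    and E: "\<And>x. (E has_real_derivative E x * poly e (ph x)) (at x)"
  shows "Sm (\<lambda>x. E x * poly R (ph x))"
proof -
  have d: "\<And>R. Dif (\<lambda>x. E x * poly R (ph x))" by (rule Dif_I, rule family_deriv[OF ph E])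
  have dd: "\<And>R. deriv (\<lambda>x. E x * poly R (ph x)) = (\<lambda>x. E x * poly (e * R + pderiv R * [:k, 0, -k:]) (ph x))"
    by (rule deriv_eqI, rule family_deriv[OF ph E])
  have "\<forall>R. Cn m (\<lambda>x. E x * poly R (ph x))" for m
  proof (induction m)
    case 0 then show ?case using d by simp
  next
    case (Suc m)
    then show ?case using d by (simp only: Cn.simps dd) blast
  qed
  then show ?thesis unfolding Sm_def by blast
qed

lemma family_Yc:
  assumes ph: "\<And>x. (ph has_real_derivative k * (1 - ph x ^ 2)) (at x)"
    and E: "\<And>x. (E has_real_derivative E x * poly e (ph x)) (at x)"
    and b: "\<And>x. \<bar>ph x\<bar> \<le> 1" and EY: "YB E"
  shows "Yc (\<lambda>x. E x * poly R (ph x))"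
proof -
  have B: "YB (\<lambda>x. E x * poly R (ph x))" for R
  proof -
    have "PB (\<lambda>x. poly R (ph x))"
      unfolding PB_def using poly_bound1[OF b] by (intro exI[of _ "\<Sum>i\<le>degree R. \<bar>coeff R i\<bar>"] exI[of _ 0]) auto
    then show ?thesis using YB_mult[OF EY] by blast
  qed
  have d: "\<And>R. Dif (\<lambda>x. E x * poly R (ph x))" by (rule Dif_I, rule family_deriv[OF ph E])
  have dd: "\<And>R. deriv (\<lambda>x. E x * poly R (ph x)) = (\<lambda>x. E x * poly (e * R + pderiv R * [:k, 0, -k:]) (ph x))"
    by (rule deriv_eqI, rule family_deriv[OF ph E])
  have "\<forall>R. Yn m (\<lambda>x. E x * poly R (ph x))" for m
  proof (induction m)
    case 0 then show ?case using d B by simp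
  next
    case (Suc m)
    then show ?case using d B by (simp only: Yn.simps dd) blast
  qed
  then show ?thesis unfolding Yc_def by blast
qed

lemma family_Pc:
  assumes ph: "\<And>x. (ph has_real_derivative k * (1 - ph x ^ 2)) (at x)"
    and E: "\<And>x. (E has_real_derivative E x * poly e (ph x)) (at x)"
    and b: "\<And>x. \<bar>ph x\<bar> \<le> 1" and EY: "PB E"
  shows "Pc (\<lambda>x. E x * poly R (ph x))"
proof -
  have B: "PB (\<lambda>x. E x * poly R (ph x))" for R
  proof -
    have "PB (\<lambda>x. poly R (ph x))"
      unfolding PB_def using poly_bound1[OF b] by (intro exI[of _ "\<Sum>i\<le>degree R. \<bar>coeff R i\<bar>"] exI[of _ 0]) auto
    then show ?thesis using PB_mult[OF EY] by blast
  qed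
  have d: "\<And>R. Dif (\<lambda>x. E x * poly R (ph x))" by (rule Dif_I, rule family_deriv[OF ph E])
  have dd: "\<And>R. deriv (\<lambda>x. E x * poly R (ph x)) = (\<lambda>x. E x * poly (e * R + pderiv R * [:k, 0, -k:]) (ph x))"
    by (rule deriv_eqI, rule family_deriv[OF ph E])
  have "\<forall>R. Pn m (\<lambda>x. E x * poly R (ph x))" for m
  proof (induction m)
    case 0 then show ?case using d B by simp
  next
    case (Suc m)
    then show ?case using d B by (simp only: Pn.simps dd) blast
  qed
  then show ?thesis unfolding Pc_def by blast
qed

lemma deriv_comp_minus:
  assumes "(f has_real_derivative d) (at (-x))"
  shows "((\<lambda>x. f (-x)) has_real_derivative -d) (at x)"
proof -
  have "((\<lambda>x. f (uminus x)) has_real_derivative d * (-1)) (at x)"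
    by (rule DERIV_chain2[where g=uminus and f=f]) (use assms in \<open>auto intro: derivative_eq_intros\<close>)
  then show ?thesis by simp
qed

lemma even_from_deriv:
  assumes G: "\<And>x. (G has_real_derivative g x) (at x)" and g: "\<And>x. g (-x) = - g x"
  shows "G (-x) = G x"
proof -
  have "\<forall>x. ((\<lambda>x. G (-x) - G x) has_real_derivative 0) (at x)"
  proof
    fix x
    have "((\<lambda>x. G (-x) - G x) has_real_derivative (- g (-x) - g x)) (at x)"
      by (intro derivative_intros deriv_comp_minus G)
    then show "((\<lambda>x. G (-x) - G x) has_real_derivative 0) (at x)" using g by simp
  qed
  from DERIV_isconst_all[OF this, of x 0] show ?thesis by simp
qed

lemma odd_from_deriv:
  assumes G: "\<And>x. (G has_real_derivative g x) (at x)" and g: "\<And>x. g (-x) = g x"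
    and G0: "G 0 = 0"
  shows "G (-x) = - G x"
proof -
  have "\<forall>x. ((\<lambda>x. G (-x) + G x) has_real_derivative 0) (at x)"
  proof
    fix x
    have "((\<lambda>x. G (-x) + G x) has_real_derivative (- g (-x) + g x)) (at x)"
      by (intro derivative_intros deriv_comp_minus G)
    then show "((\<lambda>x. G (-x) + G x) has_real_derivative 0) (at x)" using g by simp
  qed
  from DERIV_isconst_all[OF this, of x 0] G0 show ?thesis by simp
qed

lemma deriv_even_odd:
  assumes "Dif f" "\<And>x. f (-x) = f x"
  shows "deriv f (-x) = - deriv f x"
proof -
  have "((\<lambda>x. f (-x)) has_real_derivative - deriv f (-x)) (at x)"
    by (intro deriv_comp_minus Dif_D assms)
  moreover have "(\<lambda>x. f (-x)) = f" using assms(2) by auto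
  ultimately have "(f has_real_derivative - deriv f (-x)) (at x)" by simp
  with Dif_D[OF assms(1), of x] show ?thesis using DERIV_unique by fastforce
qed

lemma deriv_odd_even:
  assumes "Dif f" "\<And>x. f (-x) = - f x"
  shows "deriv f (-x) = deriv f x"
proof -
  have "((\<lambda>x. - f (-x)) has_real_derivative deriv f (-x)) (at x)"
    using deriv_comp_minus[OF Dif_D[OF assms(1)], of x] by (auto intro: derivative_eq_intros)
  moreover have "(\<lambda>x. - f (-x)) = f" using assms(2) by auto
  ultimately have "(f has_real_derivative deriv f (-x)) (at x)" by simp
  with Dif_D[OF assms(1), of x] show ?thesis using DERIV_unique by fastforce
qed

section \<open>Antiderivatives and tails\<close>

lemma antideriv:
  assumes "continuous_on UNIV g"
  shows "\<exists>G. (\<forall>x. (G has_real_derivative g x) (at x)) \<and> G 0 = 0"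
proof -
  have "\<exists>F. \<forall>x :: real. -\<infinity> < x \<longrightarrow> x < \<infinity> \<longrightarrow> (F has_vector_derivative g x) (at x)"
    by (rule einterval_antiderivative) (use assms in \<open>auto simp: continuous_on_eq_continuous_at\<close>)
  then obtain F where F: "\<And>x. (F has_real_derivative g x) (at x)"
    by (auto simp: has_real_derivative_iff_has_vector_derivative)
  show ?thesis
    by (rule exI[of _ "\<lambda>x. F x - F 0"]) (auto intro!: derivative_eq_intros F)
qed

lemma Dif_cont: "Dif f \<Longrightarrow> continuous_on UNIV f"
  by (metis Dif_def continuous_at_imp_continuous_on differentiable_imp_continuous_within)

lemma tail_m:
  assumes a: "a > (0::real)"
  shows "\<exists>m C. (\<forall>t. (m has_real_derivative -((1+t)^N * exp(-a*t))) (at t)) \<and>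
      (\<forall>t\<ge>0. 0 \<le> m t \<and> m t \<le> C * (1+t)^N * exp(-a*t))"
proof (induction N)
  case 0
  show ?case
    by (rule exI[of _ "\<lambda>t. exp(-a*t)/a"], rule exI[of _ "1/a"])
       (use a in \<open>auto intro!: derivative_eq_intros simp: field_simps\<close>)
next
  case (Suc N)
  then obtain m C where m: "\<And>t. (m has_real_derivative -((1+t)^N * exp(-a*t))) (at t)"
    "\<And>t. t \<ge> 0 \<Longrightarrow> 0 \<le> m t \<and> m t \<le> C * (1+t)^N * exp(-a*t)" by blast
  define m' where "m' t = ((1+t)^Suc N * exp(-a*t) + real (Suc N) * m t) / a" for t
  have "(m' has_real_derivative -((1+t)^Suc N * exp(-a*t))) (at t)" for t
  proof -
    have dm: "(m has_real_derivative -((1+t)^N * exp(-a*t))) (at t)" by (rule m(1))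
    show ?thesis unfolding m'_def using a
      by (auto intro!: derivative_eq_intros dm simp: field_simps simp del: power_Suc)
  qed
  moreover have "0 \<le> m' t \<and> m' t \<le> ((1 + real (Suc N) * \<bar>C\<bar>)/a) * (1+t)^Suc N * exp(-a*t)" if t: "t \<ge> 0" for t
  proof -
    have m0: "0 \<le> m t" "m t \<le> \<bar>C\<bar> * (1+t)^N * exp(-a*t)"
    proof -
      have "C * (1+t)^N * exp(-a*t) \<le> \<bar>C\<bar> * (1+t)^N * exp(-a*t)"
        using t by (intro mult_right_mono) auto
      then show "0 \<le> m t" "m t \<le> \<bar>C\<bar> * (1+t)^N * exp(-a*t)" using m(2)[OF t] by auto
    qed
    have p: "(1+t)^N \<le> (1+t)^Suc N" using t by (intro power_increasing) auto
    have "real (Suc N) * m t \<le> real (Suc N) * (\<bar>C\<bar> * (1+t)^Suc N * exp(-a*t))"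
    proof -
      have "\<bar>C\<bar> * (1+t)^N * exp(-a*t) \<le> \<bar>C\<bar> * (1+t)^Suc N * exp(-a*t)"
        using p by (intro mult_right_mono mult_left_mono) auto
      then show ?thesis using m0(2) by (intro mult_left_mono) auto
    qed
    then have "(1+t)^Suc N * exp(-a*t) + real (Suc N) * m t \<le> (1 + real (Suc N) * \<bar>C\<bar>) * (1+t)^Suc N * exp(-a*t)"
      by (simp add: algebra_simps)
    then have "m' t \<le> ((1 + real (Suc N) * \<bar>C\<bar>) * (1+t)^Suc N * exp(-a*t)) / a"
      unfolding m'_def using a by (simp add: divide_right_mono)
    moreover have "0 \<le> m' t" unfolding m'_def using a m0 t by auto
    ultimately show ?thesis by (simp add: field_simps)
  qed
  ultimately show ?case by blast
qed


lemma decay_lim: "a > 0 \<Longrightarrow> ((\<lambda>t::real. (1+t)^N * exp(-a*t)) \<longlongrightarrow> 0) at_top"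
proof -
  assume a: "a > 0"
  have s1: "filterlim (\<lambda>t::real. 1+t) at_top at_top" by real_asymp
  have s: "filterlim (\<lambda>t. a*(1+t)) at_top at_top"
    by (rule filterlim_tendsto_pos_mult_at_top[OF tendsto_const a s1])
  have "((\<lambda>t. (exp a / a^N) * ((a*(1+t))^N / exp (a*(1+t)))) \<longlongrightarrow> (exp a / a^N) * 0) at_top"
    by (intro tendsto_mult tendsto_const filterlim_compose[OF tendsto_power_div_exp_0 s])
  moreover have "(exp a / a^N) * ((a*(1+t))^N / exp (a*(1+t))) = (1+t)^N * exp(-a*t)" for t
  proof -
    have "exp (a*(1+t)) = exp a * exp (a*t)" by (simp add: exp_add[symmetric] algebra_simps)
    moreover have "exp(-a*t) = 1 / exp (a*t)" by (simp add: exp_minus field_simps)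
    ultimately show ?thesis using a by (simp add: power_mult_distrib)
  qed
  ultimately show ?thesis by simp
qed

lemma tail_pos:
  assumes G: "\<And>t. (G has_real_derivative g t) (at t)"
    and b: "\<And>t. t \<ge> 0 \<Longrightarrow> \<bar>g t\<bar> \<le> K * (1+t)^N * exp(-a*t)" and a: "a > 0"
  shows "\<exists>L C. (G \<longlongrightarrow> L) at_top \<and> (\<forall>x\<ge>0. \<bar>G x - L\<bar> \<le> K * C * (1+x)^N * exp(-a*x))"
proof -
  obtain m C where m: "\<And>t. (m has_real_derivative -((1+t)^N * exp(-a*t))) (at t)"
    "\<And>t. t \<ge> 0 \<Longrightarrow> 0 \<le> m t \<and> m t \<le> C * (1+t)^N * exp(-a*t)"
    using tail_m[OF a, of N] by blast
  have "\<bar>g 0\<bar> \<le> K" using b[of 0] by simp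
  then have K: "K \<ge> 0" by (meson abs_ge_zero order_trans)
  have key: "\<bar>G y - G x\<bar> \<le> K * m x" if xy: "0 \<le> x" "x \<le> y" for x y
  proof -
    have "(\<lambda>t. G t + K * m t) y \<le> (\<lambda>t. G t + K * m t) x"
    proof (rule DERIV_nonpos_imp_nonincreasing[OF xy(2)])
      fix t assume t: "x \<le> t" "t \<le> y"
      have "((\<lambda>t. G t + K * m t) has_real_derivative g t + K * -((1+t)^N * exp(-a*t))) (at t)"
        by (rule DERIV_add[OF G DERIV_cmult[OF m(1)]])
      moreover have "g t + K * -((1+t)^N * exp(-a*t)) \<le> 0" using b[of t] t xy by (simp add: abs_le_iff)
      ultimately show "\<exists>d. ((\<lambda>t. G t + K * m t) has_real_derivative d) (at t) \<and> d \<le> 0" by blast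
    qed
    moreover have "(\<lambda>t. G t - K * m t) x \<le> (\<lambda>t. G t - K * m t) y"
    proof (rule DERIV_nonneg_imp_nondecreasing[OF xy(2)])
      fix t assume t: "x \<le> t" "t \<le> y"
      have "((\<lambda>t. G t - K * m t) has_real_derivative g t - K * -((1+t)^N * exp(-a*t))) (at t)"
        by (rule DERIV_diff[OF G DERIV_cmult[OF m(1)]])
      moreover have "g t - K * -((1+t)^N * exp(-a*t)) \<ge> 0" using b[of t] t xy by (simp add: abs_le_iff)
      ultimately show "\<exists>d. ((\<lambda>t. G t - K * m t) has_real_derivative d) (at t) \<and> d \<ge> 0" by blast
    qed
    moreover have "0 \<le> K * m y" using m(2)[of y] K xy by auto
    ultimately show ?thesis by (simp only: abs_le_iff) linarith
  qed
  have mlim: "((\<lambda>x. K * m x) \<longlongrightarrow> 0) at_top"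
  proof -
    have d: "((\<lambda>x. (1+x)^N * exp(-a*x)) \<longlongrightarrow> 0) at_top" by (rule decay_lim[OF a])
    have c: "((\<lambda>x. C * ((1+x)^N * exp(-a*x))) \<longlongrightarrow> 0) at_top"
      using tendsto_mult[OF tendsto_const[of C] d] by simp
    have ev: "eventually (\<lambda>x. norm (m x) \<le> C * ((1+x)^N * exp(-a*x))) at_top"
    proof (rule eventually_mono[OF eventually_ge_at_top[of 0]])
      fix x :: real assume "0 \<le> x"
      then show "norm (m x) \<le> C * ((1+x)^N * exp(-a*x))" using m(2)[of x] by (simp add: mult.assoc)
    qed
    have "(m \<longlongrightarrow> 0) at_top" by (rule Lim_null_comparison[OF ev c])
    then show ?thesis using tendsto_mult[OF tendsto_const[of K], of m 0] by simp
  qed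
  have "Cauchy (\<lambda>n. G (real n))"
  proof (rule metric_CauchyI)
    fix e :: real assume e: "e > 0"
    obtain T where T: "\<And>x. x \<ge> T \<Longrightarrow> \<bar>K * m x\<bar> < e"
      using mlim[unfolded tendsto_iff] e by (auto simp: eventually_at_top_linorder)
    show "\<exists>M. \<forall>n\<ge>M. \<forall>n'\<ge>M. dist (G (real n)) (G (real n')) < e"
    proof (intro exI[of _ "nat \<lceil>max T 0\<rceil>"] allI impI)
      fix n n' assume n: "n \<ge> nat \<lceil>max T 0\<rceil>" and n': "n' \<ge> nat \<lceil>max T 0\<rceil>"
      have nT: "real n \<ge> T" "real n' \<ge> T" using n n' by linarith+
      show "dist (G (real n)) (G (real n')) < e"
      proof (cases "n \<le> n'")
        case True
        then show ?thesis using key[of "real n" "real n'"] T[OF nT(1)] by (simp add: dist_real_def abs_minus_commute)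
      next
        case False
        then show ?thesis using key[of "real n'" "real n"] T[OF nT(2)] by (simp add: dist_real_def)
      qed
    qed
  qed
  then obtain L where L: "(\<lambda>n. G (real n)) \<longlonglongrightarrow> L" using Cauchy_convergent_iff convergent_def by blast
  have bnd: "\<bar>G x - L\<bar> \<le> K * m x" if x: "x \<ge> 0" for x
  proof -
    have "(\<lambda>n. \<bar>G (real n) - G x\<bar>) \<longlonglongrightarrow> \<bar>L - G x\<bar>" by (intro tendsto_intros L)
    moreover have "\<exists>N. \<forall>n\<ge>N. \<bar>G (real n) - G x\<bar> \<le> K * m x"
    proof (intro exI[of _ "nat \<lceil>x\<rceil>"] allI impI)
      fix n assume "n \<ge> nat \<lceil>x\<rceil>"
      then have "x \<le> real n" by linarith
      then show "\<bar>G (real n) - G x\<bar> \<le> K * m x" using key x by blast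
    qed
    ultimately have "\<bar>L - G x\<bar> \<le> K * m x" by (rule LIMSEQ_le_const2)
    then show ?thesis by (simp add: abs_minus_commute)
  qed
  have "(G \<longlongrightarrow> L) at_top"
  proof -
    have "eventually (\<lambda>x. norm (G x - L) \<le> K * m x) at_top"
      by (rule eventually_mono[OF eventually_ge_at_top[of 0]]) (use bnd in simp)
    then have "((\<lambda>x. G x - L) \<longlongrightarrow> 0) at_top" by (rule Lim_null_comparison) (rule mlim)
    then show ?thesis by (subst Lim_null)
  qed
  moreover have "\<forall>x\<ge>0. \<bar>G x - L\<bar> \<le> K * C * (1+x)^N * exp(-a*x)"
  proof (intro allI impI)
    fix x :: real assume x: "x \<ge> 0"
    have "K * m x \<le> K * (C * (1+x)^N * exp(-a*x))" using m(2)[OF x] K by (intro mult_left_mono) auto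
    then show "\<bar>G x - L\<bar> \<le> K * C * (1+x)^N * exp(-a*x)" using bnd[OF x] by (simp add: mult.assoc)
  qed
  ultimately show ?thesis by blast
qed

lemma tail2:
  assumes G: "\<And>t. (G has_real_derivative g t) (at t)"
    and b: "\<And>t. \<bar>g t\<bar> \<le> K * (1+\<bar>t\<bar>)^N * exp(-a*\<bar>t\<bar>)" and a: "a > 0"
  shows "\<exists>Lp Lm C. (G \<longlongrightarrow> Lp) at_top \<and> (G \<longlongrightarrow> Lm) at_bot \<and>
     (\<forall>x\<ge>0. \<bar>G x - Lp\<bar> \<le> K * C * (1+x)^N * exp(-a*x)) \<and>
     (\<forall>x\<le>0. \<bar>G x - Lm\<bar> \<le> K * C * (1+\<bar>x\<bar>)^N * exp(-a*\<bar>x\<bar>))"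
proof -
  have "\<bar>g 0\<bar> \<le> K" using b[of 0] by simp
  then have K: "K \<ge> 0" by (meson abs_ge_zero order_trans)
  have bp: "\<And>t. t \<ge> 0 \<Longrightarrow> \<bar>g t\<bar> \<le> K * (1+t)^N * exp(-a*t)" using b by (metis abs_of_nonneg)
  have bm: "\<And>t. t \<ge> 0 \<Longrightarrow> \<bar>g (-t)\<bar> \<le> K * (1+t)^N * exp(-a*t)" using b by (metis abs_minus abs_of_nonneg)
  obtain Lp C1 where 1: "(G \<longlongrightarrow> Lp) at_top" "\<forall>x\<ge>0. \<bar>G x - Lp\<bar> \<le> K * C1 * (1+x)^N * exp(-a*x)"
    using tail_pos[OF G bp a] by blast
  have H: "((\<lambda>t. - G (-t)) has_real_derivative g (-t)) (at t)" for t
  proof -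
    have "((\<lambda>t. G (-t)) has_real_derivative - g (-t)) (at t)"
      using deriv_comp_minus[of G "g (-t)" t] G by simp
    from DERIV_minus[OF this] show ?thesis by simp
  qed
  obtain Lh C2 where 2: "((\<lambda>t. - G (-t)) \<longlongrightarrow> Lh) at_top" "\<forall>x\<ge>0. \<bar>- G (-x) - Lh\<bar> \<le> K * C2 * (1+x)^N * exp(-a*x)"
    using tail_pos[OF H bm a] by blast
  have lm: "(G \<longlongrightarrow> -Lh) at_bot"
    unfolding filterlim_at_bot_mirror using tendsto_minus[OF 2(1)] by simp
  have w: "0 \<le> (1+x)^N * exp(-a*x)" if "x \<ge> 0" for x :: real using that by auto
  have A: "\<forall>x\<ge>0. \<bar>G x - Lp\<bar> \<le> K * max C1 C2 * (1+x)^N * exp(-a*x)"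
  proof (intro allI impI)
    fix x :: real assume x: "x \<ge> 0"
    have "K * C1 * ((1+x)^N * exp(-a*x)) \<le> K * max C1 C2 * ((1+x)^N * exp(-a*x))"
      using K w[OF x] by (intro mult_right_mono mult_left_mono) auto
    then show "\<bar>G x - Lp\<bar> \<le> K * max C1 C2 * (1+x)^N * exp(-a*x)" using 1(2) x by (auto simp: mult.assoc)
  qed
  have B: "\<forall>x\<le>0. \<bar>G x - - Lh\<bar> \<le> K * max C1 C2 * (1+\<bar>x\<bar>)^N * exp(-a*\<bar>x\<bar>)"
  proof (intro allI impI)
    fix x :: real assume x: "x \<le> 0"
    have "K * C2 * ((1+\<bar>x\<bar>)^N * exp(-a*\<bar>x\<bar>)) \<le> K * max C1 C2 * ((1+\<bar>x\<bar>)^N * exp(-a*\<bar>x\<bar>))"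
      using K w[of "\<bar>x\<bar>"] by (intro mult_right_mono mult_left_mono) auto
    moreover have "\<bar>G x - - Lh\<bar> = \<bar>- G (-\<bar>x\<bar>) - Lh\<bar>"
    proof -
      have "-\<bar>x\<bar> = x" using x by simp
      then show ?thesis by (simp add: abs_minus_commute)
    qed
    ultimately show "\<bar>G x - - Lh\<bar> \<le> K * max C1 C2 * (1+\<bar>x\<bar>)^N * exp(-a*\<bar>x\<bar>)"
      using 2(2)[rule_format, of "\<bar>x\<bar>"] by (auto simp: mult.assoc)
  qed
  show ?thesis using 1(1) lm A B by blast
qed


lemma cosh_ge_exp: "exp \<bar>y\<bar> / 2 \<le> cosh (y::real)"
proof -
  have "cosh y = cosh \<bar>y\<bar>" by simp
  also have "\<dots> = (exp \<bar>y\<bar> + exp (-\<bar>y\<bar>)) / 2" by (simp add: cosh_field_def)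
  finally show ?thesis by (smt (verit) exp_gt_zero divide_right_mono)
qed

lemma cosh_le_exp: "cosh (y::real) \<le> exp \<bar>y\<bar>"
proof -
  have 1: "cosh y = (exp \<bar>y\<bar> + exp (-\<bar>y\<bar>)) / 2" by (metis cosh_real_abs cosh_field_def)
  have 2: "exp (-\<bar>y\<bar>) \<le> exp \<bar>y\<bar>" by simp
  have 3: "2 * cosh y = exp \<bar>y\<bar> + exp (-\<bar>y\<bar>)" using 1 by (simp add: field_simps)
  show ?thesis using 3 2 by linarith
qed

lemma one_minus_tanh2: "1 - tanh (y::real) ^ 2 = 1 / cosh y ^ 2"
  unfolding tanh_def using cosh_real_pos[of y] by (simp add: power_divide field_simps sinh_square_eq)

locale sol =
  fixes p :: nat
  assumes p: "p \<in> {2,3,4}"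
begin

definition k :: real where "k = (real p - 1) / 2"
abbreviation Q where "Q \<equiv> Qp p"
abbreviation ph where "ph \<equiv> phi p"

lemma k_ge: "k \<ge> 1/2" using p unfolding k_def by auto
lemma k_pos: "k > 0" using k_ge by simp
lemma p_real: "real p = 2*k+1" by (simp add: k_def field_simps)
lemma pm1_real: "real (p - 1) = 2*k" using p unfolding k_def by auto
lemma p_ge: "p \<ge> 2" using p by auto

lemma ph_def': "ph x = tanh (k * x)" unfolding phi_def k_def by simp
lemma ph_minus: "ph (-x) = - ph x" unfolding ph_def' by simp
lemma ph0: "ph 0 = 0" unfolding ph_def' by simp
lemma ph_lt: "\<bar>ph x\<bar> < 1" unfolding ph_def' using tanh_real_lt_1 tanh_real_gt_neg1 by (simp add: abs_less_iff)
lemma ph_le: "\<bar>ph x\<bar> \<le> 1" using ph_lt less_imp_le by blast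
lemma ph_deriv: "(ph has_real_derivative k * (1 - ph x ^ 2)) (at x)"
proof -
  have "((\<lambda>x. tanh (k*x)) has_real_derivative (1 - tanh (k*x) ^ 2) * k) (at x)"
    by (rule DERIV_chain2[where f=tanh]) (auto intro!: derivative_eq_intros has_field_derivative_tanh simp: cosh_real_pos[THEN less_imp_neq, symmetric])
  then show ?thesis unfolding ph_def'[abs_def] by (simp add: mult.commute)
qed

lemma s_pos: "0 < 1 - ph x ^ 2"
proof -
  have "ph x ^ 2 < 1" using ph_lt[of x] by (simp add: abs_square_less_1)
  then show ?thesis by simp
qed

lemma s_cosh: "1 - ph x ^ 2 = 1 / cosh (k*x) ^ 2" unfolding ph_def' by (rule one_minus_tanh2)

lemma s_le2: "1 - ph x ^ 2 \<le> 4 * exp (-(2*k) * \<bar>x\<bar>)"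
proof -
  have c: "exp (k*\<bar>x\<bar>) / 2 \<le> cosh (k*x)" using cosh_ge_exp[of "k*x"] k_pos by (simp add: abs_mult)
  have "(exp (k*\<bar>x\<bar>) / 2)^2 \<le> cosh (k*x)^2" by (rule power_mono[OF c]) auto
  then have "exp (2*k*\<bar>x\<bar>) / 4 \<le> cosh (k*x)^2" by (simp add: power2_eq_square exp_add[symmetric] algebra_simps)
  then have "1 / cosh (k*x)^2 \<le> 1 / (exp (2*k*\<bar>x\<bar>) / 4)"
    by (intro divide_left_mono) auto
  also have "\<dots> = 4 * exp (-(2*k) * \<bar>x\<bar>)" by (simp add: exp_minus field_simps)
  finally show ?thesis using s_cosh by simp
qed

lemma s_ge2: "exp (-(2*k) * \<bar>x\<bar>) \<le> 1 - ph x ^ 2"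
proof -
  have c: "cosh (k*x) \<le> exp (k*\<bar>x\<bar>)" using cosh_le_exp[of "k*x"] k_pos by (simp add: abs_mult)
  have "cosh (k*x)^2 \<le> exp (k*\<bar>x\<bar>)^2" by (rule power_mono[OF c]) (simp add: less_imp_le)
  then have "cosh (k*x)^2 \<le> exp (2*k*\<bar>x\<bar>)" by (simp add: power2_eq_square exp_add[symmetric] algebra_simps)
  then have "1 / exp (2*k*\<bar>x\<bar>) \<le> 1 / cosh (k*x)^2"
    by (intro divide_left_mono) auto
  moreover have "exp (-(2*k) * \<bar>x\<bar>) = 1 / exp (2*k*\<bar>x\<bar>)" by (simp add: exp_minus field_simps)
  ultimately show ?thesis using s_cosh[of x] by simp
qed

lemma s_le: "1 - ph x ^ 2 \<le> 4 * exp (- \<bar>x\<bar>)"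
proof -
  have "\<bar>x\<bar> \<le> 2*k*\<bar>x\<bar>" using mult_right_mono[of 1 "2*k" "\<bar>x\<bar>"] k_ge by simp
  then have "exp (-(2*k) * \<bar>x\<bar>) \<le> exp (- \<bar>x\<bar>)" by simp
  then show ?thesis using s_le2[of x] by linarith
qed

lemma Q_def': "Q x = ((k+1) * (1 - ph x ^ 2)) powr (1/(2*k))"
proof -
  have 1: "(real p - 1) / 2 = k" by (simp add: k_def)
  have 2: "real p - 1 = 2*k" by (simp add: k_def field_simps)
  have 3: "real p + 1 = 2*(k+1)" by (simp add: k_def field_simps)
  have "(real p + 1) / (2 * (cosh ((real p - 1) / 2 * x))\<^sup>2) = (k+1) * (1 - ph x ^ 2)"
    unfolding s_cosh 1 3 by (simp add: field_simps)
  then show ?thesis unfolding Qp_def 2 by simp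
qed

lemma Q_pos: "Q x > 0"
proof -
  have h: "ph x^2 \<noteq> 1" using s_pos[of x] by auto
  then show ?thesis using k_pos unfolding Q_def' by simp
qed

lemma Q_pow: "Q x ^ (p-1) = (k+1) * (1 - ph x ^ 2)"
proof -
  have b: "(k+1) * (1 - ph x ^ 2) > 0" using s_pos k_pos by simp
  have "Q x ^ (p-1) = Q x powr (real (p-1))" using Q_pos[of x] by (simp add: powr_realpow)
  also have "\<dots> = ((k+1) * (1 - ph x ^ 2)) powr ((1/(2*k)) * real (p-1))"
    unfolding Q_def' by (simp add: powr_powr)
  finally have "Q x ^ (p-1) = ((k+1) * (1 - ph x ^ 2)) powr ((1/(2*k)) * real (p-1))" .
  also have "(1/(2*k)) * real (p-1) = 1" using pm1_real k_pos by simp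
  finally show ?thesis using b by simp
qed

lemma Q_minus: "Q (-x) = Q x" unfolding Q_def' ph_minus by simp

lemma Q_deriv: "(Q has_real_derivative - (Q x * ph x)) (at x)"
proof -
  define b where "b x = (k+1) * (1 - ph x ^ 2)" for x
  have b: "b x > 0" unfolding b_def using s_pos k_pos by simp
  have db: "(b has_real_derivative (k+1) * (- (2 * ph x * (k * (1 - ph x ^ 2))))) (at x)"
    unfolding b_def by (auto intro!: derivative_eq_intros ph_deriv simp: power2_eq_square)
  have "((\<lambda>x. b x powr (1/(2*k))) has_real_derivative
      (1/(2*k)) * b x powr (1/(2*k) - 1) * ((k+1) * (- (2 * ph x * (k * (1 - ph x ^ 2)))))) (at x)"
    using DERIV_fun_powr[OF db b, of "1/(2*k)"] by simp
  moreover have "(1/(2*k)) * b x powr (1/(2*k) - 1) * ((k+1) * (- (2 * ph x * (k * (1 - ph x ^ 2)))))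
      = - (b x powr (1/(2*k)) * ph x)"
  proof -
    have e: "b x powr (1/(2*k) - 1) = b x powr (1/(2*k)) / b x" using b by (simp add: powr_diff)
    define B where "B = b x powr (1/(2*k))"
    have bx: "b x = (k+1) * (1 - ph x ^ 2)" unfolding b_def by simp
    have r: "(k+1) * (- (2 * ph x * (k * (1 - ph x ^ 2)))) = b x * (-2*k*ph x)"
      unfolding bx by (simp add: algebra_simps)
    have "(1/(2*k)) * (B / b x) * ((k+1) * (- (2 * ph x * (k * (1 - ph x ^ 2))))) = - (B * ph x)"
      unfolding r using k_pos b[THEN less_imp_neq] by (simp add: field_simps)
    then show ?thesis unfolding e B_def .
  qed
  moreover have "Q = (\<lambda>x. b x powr (1/(2*k)))" unfolding b_def Q_def'[abs_def] by simp
  ultimately show ?thesis by simp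
qed

lemma Q_le: "Q x \<le> (4*(k+1)) powr (1/(2*k)) * exp (- \<bar>x\<bar>)"
proof -
  have "Q x \<le> ((k+1) * (4 * exp (-(2*k) * \<bar>x\<bar>))) powr (1/(2*k))"
    unfolding Q_def' using s_pos[of x, THEN less_imp_le] k_pos s_le2[of x] by (intro powr_mono2) auto
  also have "\<dots> = ((4*(k+1)) * exp (-(2*k) * \<bar>x\<bar>)) powr (1/(2*k))" by (simp add: algebra_simps)
  also have "\<dots> = (4*(k+1)) powr (1/(2*k)) * exp (-(2*k) * \<bar>x\<bar>) powr (1/(2*k))"
    using k_pos by (intro powr_mult; auto)
  also have "exp (-(2*k) * \<bar>x\<bar>) powr (1/(2*k)) = exp (- \<bar>x\<bar>)"
    using k_pos by (simp add: exp_powr_real)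
  finally show ?thesis .
qed

lemma Q_ge: "(k+1) powr (1/(2*k)) * exp (- \<bar>x\<bar>) \<le> Q x"
proof -
  have "((k+1) * exp (-(2*k) * \<bar>x\<bar>)) powr (1/(2*k)) \<le> Q x"
    unfolding Q_def' using s_pos[of x, THEN less_imp_le] k_pos s_ge2[of x] by (intro powr_mono2) auto
  moreover have "((k+1) * exp (-(2*k) * \<bar>x\<bar>)) powr (1/(2*k)) = (k+1) powr (1/(2*k)) * exp (- \<bar>x\<bar>)"
    using k_pos by (simp add: powr_mult exp_powr_real)
  ultimately show ?thesis by simp
qed

lemma Q_le1: "Q x \<le> (k+1) powr (1/(2*k))"
proof -
  have "Q x \<le> ((k+1) * 1) powr (1/(2*k))"
    unfolding Q_def' using s_pos[of x, THEN less_imp_le] k_pos by (intro powr_mono2) auto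
  then show ?thesis by simp
qed

end


context sol
begin

lemma const_deriv1: "((\<lambda>x. 1::real) has_real_derivative 1 * poly 0 (ph x)) (at x)"
  by simp
lemma Q_deriv': "(Q has_real_derivative Q x * poly [:0,-1:] (ph x)) (at x)"
  using Q_deriv[of x] by simp
lemma s_deriv': "((\<lambda>x. 1 - ph x ^ 2) has_real_derivative (1 - ph x ^ 2) * poly [:0,-2*k:] (ph x)) (at x)"
  by (auto intro!: derivative_eq_intros ph_deriv simp: algebra_simps power2_eq_square)
lemma iQ_deriv': "((\<lambda>x. 1 / Q x) has_real_derivative (1 / Q x) * poly [:0,1:] (ph x)) (at x)"
  using Q_pos[of x] by (auto intro!: derivative_eq_intros Q_deriv simp: field_simps power2_eq_square)
lemma iQ2_deriv': "((\<lambda>x. 1 / Q x ^ 2) has_real_derivative (1 / Q x ^ 2) * poly [:0,2:] (ph x)) (at x)"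
  using Q_pos[of x] by (auto intro!: derivative_eq_intros Q_deriv simp: field_simps power2_eq_square)

lemma YB_Q: "YB Q"
  unfolding YB_def using Q_le Q_pos
  by (intro exI[of _ "(4*(k+1)) powr (1/(2*k))"] exI[of _ 0]) (auto simp: less_imp_le)
lemma YB_s: "YB (\<lambda>x. 1 - ph x ^ 2)"
  unfolding YB_def using s_le s_pos
  by (intro exI[of _ 4] exI[of _ 0]) (auto simp: less_imp_le)

lemma Pc_phR: "Pc (\<lambda>x. poly R (ph x))"
  using family_Pc[OF ph_deriv const_deriv1 ph_le PB_const, of R] by simp
lemma Yc_QR: "Yc (\<lambda>x. Q x * poly R (ph x))"
  by (rule family_Yc[OF ph_deriv Q_deriv' ph_le YB_Q])
lemma Yc_sR: "Yc (\<lambda>x. (1 - ph x ^ 2) * poly R (ph x))"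
  by (rule family_Yc[OF ph_deriv s_deriv' ph_le YB_s])
lemma Sm_iQR: "Sm (\<lambda>x. (1 / Q x) * poly R (ph x))"
  by (rule family_Sm[OF ph_deriv iQ_deriv'])
lemma Sm_iQ2R: "Sm (\<lambda>x. (1 / Q x ^ 2) * poly R (ph x))"
  by (rule family_Sm[OF ph_deriv iQ2_deriv'])

lemma Pc_ph: "Pc ph" using Pc_phR[of "[:0,1:]"] by simp
lemma Yc_Q: "Yc Q" using Yc_QR[of 1] by simp
lemma Yc_s: "Yc (\<lambda>x. 1 - ph x ^ 2)" using Yc_sR[of 1] by simp
lemma Sm_iQ2: "Sm (\<lambda>x. 1 / Q x ^ 2)" using Sm_iQ2R[of 1] by simp
lemma Sm_iQ: "Sm (\<lambda>x. 1 / Q x)" using Sm_iQR[of 1] by simp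

definition V :: "real \<Rightarrow> real" where "V x = real p * Q x ^ (p-1)"
lemma V_alt: "V x = (2*k+1)*(k+1)*(1 - ph x ^ 2)"
  unfolding V_def Q_pow p_real by simp
lemma Yc_V: "Yc V"
  using Yc_cmult[OF Yc_s, of "(2*k+1)*(k+1)"] by (simp add: V_alt[abs_def] mult.assoc)
lemma Pc_V: "Pc V" using Yc_V Yc_Pc by blast
lemma V_even: "V (-x) = V x" unfolding V_alt ph_minus by simp

lemma deriv_ph: "deriv ph = (\<lambda>x. k * (1 - ph x ^ 2))" by (rule deriv_eqI, rule ph_deriv)
lemma deriv_Q: "deriv Q = (\<lambda>x. - (Q x * ph x))" by (rule deriv_eqI, rule Q_deriv)
lemma Dif_ph: "Dif ph" by (rule Dif_I, rule ph_deriv)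
lemma Dif_Q: "Dif Q" by (rule Dif_I, rule Q_deriv)

definition S :: "real \<Rightarrow> real" where
  "S = (SOME G. (\<forall>x. (G has_real_derivative 1 / Q x ^ 2) (at x)) \<and> G 0 = 0)"
lemma S_prop: "(\<forall>x. (S has_real_derivative 1 / Q x ^ 2) (at x)) \<and> S 0 = 0"
proof -
  have "\<exists>G. (\<forall>x. (G has_real_derivative 1 / Q x ^ 2) (at x)) \<and> G 0 = 0"
    by (rule antideriv, rule Dif_cont, rule Sm_Dif, rule Sm_iQ2)
  then show ?thesis unfolding S_def by (rule someI_ex)
qed
lemma S_deriv: "(S has_real_derivative 1 / Q x ^ 2) (at x)" using S_prop by blast
lemma S0: "S 0 = 0" using S_prop by blast
lemma S_odd: "S (-x) = - S x"
  by (rule odd_from_deriv[OF S_deriv _ S0]) (simp add: Q_minus)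

definition y1 :: "real \<Rightarrow> real" where "y1 x = Q x * ph x"
definition d1 :: "real \<Rightarrow> real" where "d1 x = Q x * (k - (k+1) * ph x ^ 2)"
definition dd1 :: "real \<Rightarrow> real" where
  "dd1 x = - (Q x * ph x) * (k - (k+1) * ph x ^ 2) - Q x * (2 * (k+1) * ph x * (k * (1 - ph x ^ 2)))"
definition c0 :: real where "c0 = 1 + 2 / k"
definition y2 :: "real \<Rightarrow> real" where "y2 x = 1 / (k * Q x) - c0 * (Q x * ph x) * S x"
definition d2 :: "real \<Rightarrow> real" where "d2 x = ph x / (k * Q x) - c0 * (d1 x * S x + ph x / Q x)"
definition dd2 :: "real \<Rightarrow> real" where
  "dd2 x = (k * (1 - ph x ^ 2) + ph x ^ 2) / (k * Q x)
     - c0 * (dd1 x * S x + d1 x / Q x ^ 2 + (k * (1 - ph x ^ 2) + ph x ^ 2) / Q x)"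

lemma y1_deriv: "(y1 has_real_derivative d1 x) (at x)"
  unfolding y1_def[abs_def] d1_def
  by (auto intro!: derivative_eq_intros Q_deriv ph_deriv simp: algebra_simps power2_eq_square)
lemma d1_deriv: "(d1 has_real_derivative dd1 x) (at x)"
  unfolding d1_def[abs_def] dd1_def
  by (auto intro!: derivative_eq_intros Q_deriv ph_deriv simp: algebra_simps power2_eq_square)
lemma phQ_deriv: "((\<lambda>x. ph x / Q x) has_real_derivative (k * (1 - ph x ^ 2) + ph x ^ 2) / Q x) (at x)"
  using Q_pos[of x] by (auto intro!: derivative_eq_intros Q_deriv ph_deriv simp: field_simps power2_eq_square)
lemma phkQ_deriv: "((\<lambda>x. ph x / (k * Q x)) has_real_derivative (k * (1 - ph x ^ 2) + ph x ^ 2) / (k * Q x)) (at x)"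
  using Q_pos[of x] k_pos by (auto intro!: derivative_eq_intros Q_deriv ph_deriv simp: field_simps power2_eq_square)
lemma y2_deriv: "(y2 has_real_derivative d2 x) (at x)"
proof -
  have "((\<lambda>x. 1 / (k * Q x)) has_real_derivative ph x / (k * Q x)) (at x)"
    using Q_pos[of x] k_pos by (auto intro!: derivative_eq_intros Q_deriv simp: field_simps power2_eq_square)
  moreover have "((\<lambda>x. y1 x * S x) has_real_derivative d1 x * S x + ph x / Q x) (at x)"
  proof -
    have "((\<lambda>x. y1 x * S x) has_real_derivative d1 x * S x + (1 / Q x ^ 2) * y1 x) (at x)"
      by (rule DERIV_mult[OF y1_deriv S_deriv])
    moreover have "(1 / Q x ^ 2) * y1 x = ph x / Q x" unfolding y1_def using Q_pos[of x] by (simp add: field_simps power2_eq_square)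
    ultimately show ?thesis by simp
  qed
  ultimately have "((\<lambda>x. 1 / (k * Q x) - c0 * (y1 x * S x)) has_real_derivative ph x / (k * Q x) - c0 * (d1 x * S x + ph x / Q x)) (at x)"
    by (intro DERIV_diff DERIV_cmult)
  moreover have "(\<lambda>x. 1 / (k * Q x) - c0 * (y1 x * S x)) = y2" unfolding y2_def[abs_def] y1_def by (simp add: mult.assoc)
  ultimately show ?thesis unfolding d2_def by simp
qed
lemma d2_deriv: "(d2 has_real_derivative dd2 x) (at x)"
proof -
  have "((\<lambda>x. d1 x * S x) has_real_derivative dd1 x * S x + (1 / Q x ^ 2) * d1 x) (at x)"
    by (rule DERIV_mult[OF d1_deriv S_deriv])
  then have dS: "((\<lambda>x. d1 x * S x) has_real_derivative dd1 x * S x + d1 x / Q x ^ 2) (at x)" by simp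
  show ?thesis unfolding d2_def[abs_def] dd2_def
    by (rule DERIV_diff[OF phkQ_deriv DERIV_cmult[OF DERIV_add[OF dS phQ_deriv]]])
qed

lemma L_y1: "dd1 x = (1 - V x) * y1 x"
  unfolding dd1_def y1_def V_alt by (simp add: algebra_simps power2_eq_square)

lemma L_y2: "dd2 x = (1 - V x) * y2 x"
proof -
  have q: "Q x > 0" using Q_pos .
  have e1: "dd1 x * S x = (1 - V x) * (Q x * ph x) * S x" using L_y1 unfolding y1_def by simp
  have "dd2 x - (1 - V x) * y2 x =
     (k * (1 - ph x ^ 2) + ph x ^ 2) / (k * Q x) - c0 * (d1 x / Q x ^ 2 + (k * (1 - ph x ^ 2) + ph x ^ 2) / Q x)
      - (1 - V x) / (k * Q x)"
    unfolding dd2_def y2_def e1 by (simp add: algebra_simps)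
  also have "\<dots> = 0"
    unfolding d1_def V_alt c0_def using q k_pos by (simp add: field_simps power2_eq_square)
  finally show ?thesis by simp
qed

lemma wronsk: "y1 x * d2 x - d1 x * y2 x = -1"
  unfolding y1_def d2_def d1_def y2_def c0_def using Q_pos[of x] k_pos
  by (simp add: field_simps power2_eq_square)

lemma y1_odd: "y1 (-x) = - y1 x" unfolding y1_def Q_minus ph_minus by simp
lemma y2_even: "y2 (-x) = y2 x" unfolding y2_def Q_minus ph_minus S_odd by simp

end


lemma ode_Yc:
  assumes du: "\<And>x. (u has_real_derivative u1 x) (at x)"
    and du1: "\<And>x. (u1 has_real_derivative u x * W x - h x) (at x)"
    and Bu: "YB u" and Bu1: "YB u1" and h: "Yc h" and W: "Pc W"
  shows "Yc u"
proof -
  have D: "deriv u = u1" by (rule deriv_eqI, rule du)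
  have D1: "deriv u1 = (\<lambda>x. u x * W x - h x)" by (rule deriv_eqI, rule du1)
  have "Yn m u \<and> Yn m u1" for m
  proof (induction m)
    case 0 then show ?case using Bu Bu1 Dif_I[OF du] Dif_I[OF du1] by simp
  next
    case (Suc m)
    have "Yn m (\<lambda>x. u x * W x - h x)"
      using Suc W h unfolding Pc_def Yc_def by (intro Yn_diff Yn_mult) auto
    then show ?case using Suc Bu Bu1 Dif_I[OF du] Dif_I[OF du1] by (simp add: D D1)
  qed
  then show ?thesis unfolding Yc_def by blast
qed

lemma abs_prod_le: "\<bar>a\<bar> \<le> A \<Longrightarrow> \<bar>b\<bar> \<le> B \<Longrightarrow> \<bar>a * b\<bar> \<le> A * (B::real)"
  by (simp add: abs_mult mult_mono')

lemma mvt_abs: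
  assumes "a \<le> b" and G: "\<And>t. a \<le> t \<Longrightarrow> t \<le> b \<Longrightarrow> (G has_real_derivative g t) (at t)"
    and M: "\<And>t. a \<le> t \<Longrightarrow> t \<le> b \<Longrightarrow> \<bar>g t\<bar> \<le> M"
  shows "\<bar>G b - G a\<bar> \<le> M * (b - a)"
proof -
  have 1: "(\<lambda>t. G t - M * t) b \<le> (\<lambda>t. G t - M * t) a"
  proof (rule DERIV_nonpos_imp_nonincreasing[OF assms(1)])
    fix t assume t: "a \<le> t" "t \<le> b"
    have "((\<lambda>t. G t - M * t) has_real_derivative g t - M) (at t)"
      using G[OF t] by (auto intro!: derivative_eq_intros)
    then show "\<exists>y. ((\<lambda>t. G t - M * t) has_real_derivative y) (at t) \<and> y \<le> 0"
      using M[OF t] by (intro exI[of _ "g t - M"]) auto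
  qed
  have 2: "(\<lambda>t. G t + M * t) a \<le> (\<lambda>t. G t + M * t) b"
  proof (rule DERIV_nonneg_imp_nondecreasing[OF assms(1)])
    fix t assume t: "a \<le> t" "t \<le> b"
    have "((\<lambda>t. G t + M * t) has_real_derivative g t + M) (at t)"
      using G[OF t] by (auto intro!: derivative_eq_intros)
    then show "\<exists>y. ((\<lambda>t. G t + M * t) has_real_derivative y) (at t) \<and> y \<ge> 0"
      using M[OF t] by (intro exI[of _ "g t + M"]) auto
  qed
  show ?thesis using 1 2 by (simp add: algebra_simps abs_le_iff)
qed

lemma mvt_abs0:
  assumes G: "\<And>t. (G has_real_derivative g t) (at t)"
    and M: "\<And>t. \<bar>t\<bar> \<le> \<bar>x\<bar> \<Longrightarrow> \<bar>g t\<bar> \<le> M"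
  shows "\<bar>G x - G 0\<bar> \<le> M * \<bar>x\<bar>"
proof (cases "x \<ge> 0")
  case True
  then show ?thesis using mvt_abs[of 0 x G g M] G M by auto
next
  case False
  then have "\<bar>G 0 - G x\<bar> \<le> M * (0 - x)" using mvt_abs[of x 0 G g M] G M by auto
  then show ?thesis using False by (simp add: abs_minus_commute)
qed

context sol
begin

definition CQ :: real where "CQ = (4*(k+1)) powr (1/(2*k))"
definition cq :: real where "cq = (k+1) powr (1/(2*k))"
lemma cq_pos: "cq > 0" unfolding cq_def using k_pos by simp
lemma CQ_pos: "CQ > 0" unfolding CQ_def using k_pos by simp
lemma Q_le': "Q x \<le> CQ * exp (-\<bar>x\<bar>)" unfolding CQ_def by (rule Q_le)
lemma iQ_le: "1 / Q x \<le> exp \<bar>x\<bar> / cq"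
proof -
  have "cq * exp (-\<bar>x\<bar>) \<le> Q x" unfolding cq_def by (rule Q_ge)
  then show ?thesis using cq_pos Q_pos[of x] by (simp add: field_simps exp_minus)
qed

lemma y1_bnd: "\<bar>y1 x\<bar> \<le> CQ * exp (-\<bar>x\<bar>)"
proof -
  have "\<bar>y1 x\<bar> = Q x * \<bar>ph x\<bar>" unfolding y1_def using Q_pos[of x] by (simp add: abs_mult)
  also have "\<dots> \<le> Q x * 1" using ph_le[of x] Q_pos[of x] by (intro mult_left_mono) auto
  finally show ?thesis using Q_le'[of x] by simp
qed

lemma d1_bnd: "\<bar>d1 x\<bar> \<le> (2*k+1) * CQ * exp (-\<bar>x\<bar>)"
proof -
  have "\<bar>k - (k+1) * ph x ^ 2\<bar> \<le> 2*k+1"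
  proof -
    have "ph x ^ 2 \<le> 1" using ph_le[of x] by (simp add: abs_square_le_1)
    then have a: "(k+1) * ph x ^ 2 \<le> (k+1) * 1" using k_pos by (intro mult_left_mono) auto
    have b: "0 \<le> (k+1) * ph x ^ 2" using k_pos by simp
    have "\<forall>z. 0 \<le> z \<longrightarrow> z \<le> k+1 \<longrightarrow> \<bar>k - z\<bar> \<le> 2*k+1" using k_pos by auto
    then show ?thesis using a b by simp
  qed
  then have "\<bar>d1 x\<bar> \<le> Q x * (2*k+1)" unfolding d1_def using Q_pos[of x] by (simp add: abs_mult mult_left_mono)
  also have "\<dots> \<le> CQ * exp (-\<bar>x\<bar>) * (2*k+1)" using Q_le'[of x] k_pos by (intro mult_right_mono) auto
  finally show ?thesis by (simp add: algebra_simps)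
qed

lemma S_bnd: "\<bar>S x\<bar> \<le> \<bar>x\<bar> * exp (2*\<bar>x\<bar>) / cq^2"
proof -
  have "\<bar>S x - S 0\<bar> \<le> (exp (2*\<bar>x\<bar>) / cq^2) * \<bar>x\<bar>"
  proof (rule mvt_abs0[OF S_deriv])
    fix t :: real assume t: "\<bar>t\<bar> \<le> \<bar>x\<bar>"
    have "1 / Q t \<le> exp \<bar>t\<bar> / cq" by (rule iQ_le)
    also have "\<dots> \<le> exp \<bar>x\<bar> / cq" using t cq_pos by (simp add: divide_right_mono)
    finally have "1 / Q t \<le> exp \<bar>x\<bar> / cq" .
    then have "(1 / Q t)^2 \<le> (exp \<bar>x\<bar> / cq)^2" using Q_pos[of t] by (intro power_mono) auto
    then show "\<bar>1 / Q t ^ 2\<bar> \<le> exp (2*\<bar>x\<bar>) / cq^2"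
      by (simp add: power_divide exp_double[symmetric] power2_eq_square mult_exp_exp)
  qed
  then show ?thesis using S0 by (simp add: mult.commute)
qed

definition C2 :: real where "C2 = 1/(k*cq) + \<bar>c0\<bar> * CQ / cq^2 + \<bar>c0\<bar> * (2*k+1) * CQ / cq^2 + \<bar>c0\<bar> / cq"

lemma C2_nonneg: "C2 \<ge> 0" unfolding C2_def using k_pos cq_pos CQ_pos by auto

lemma exp_cancel: "exp (-\<bar>x\<bar>) * exp (2*\<bar>x\<bar>) = exp \<bar>x::real\<bar>"
  by (simp add: mult_exp_exp)

lemma y2_bnd: "\<bar>y2 x\<bar> \<le> C2 * (1+\<bar>x\<bar>) * exp \<bar>x\<bar>"
proof -
  define E where "E = exp \<bar>x\<bar>"
  have E: "E > 0" unfolding E_def by simp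
  have t1: "\<bar>1 / (k * Q x)\<bar> \<le> (1/k) * (E / cq)"
    using abs_prod_le[of "1/k" "1/k" "1/Q x" "E/cq"] iQ_le[of x] Q_pos[of x] k_pos unfolding E_def by simp
  have "\<bar>(Q x * ph x) * S x\<bar> \<le> (CQ * exp (-\<bar>x\<bar>)) * (\<bar>x\<bar> * exp (2*\<bar>x\<bar>) / cq^2)"
    using abs_prod_le[OF y1_bnd[of x, unfolded y1_def] S_bnd[of x]] .
  also have "\<dots> = CQ / cq^2 * \<bar>x\<bar> * E" unfolding E_def using exp_cancel[of x] by (simp add: field_simps)
  finally have t2': "\<bar>(Q x * ph x) * S x\<bar> \<le> CQ / cq^2 * \<bar>x\<bar> * E" .
  have t2: "\<bar>c0 * (Q x * ph x) * S x\<bar> \<le> \<bar>c0\<bar> * (CQ / cq^2 * \<bar>x\<bar> * E)"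
  proof -
    have "\<bar>c0 * (Q x * ph x) * S x\<bar> = \<bar>c0\<bar> * \<bar>(Q x * ph x) * S x\<bar>" by (simp add: abs_mult)
    also have "\<dots> \<le> \<bar>c0\<bar> * (CQ / cq^2 * \<bar>x\<bar> * E)" by (rule mult_left_mono[OF t2']) simp
    finally show ?thesis .
  qed
  have "\<bar>y2 x\<bar> \<le> (1/k) * (E / cq) + \<bar>c0\<bar> * (CQ / cq^2 * \<bar>x\<bar> * E)"
    unfolding y2_def using t1 t2 abs_triangle_ineq4[of "1 / (k * Q x)" "c0 * (Q x * ph x) * S x"] by linarith
  also have "\<dots> \<le> C2 * (1+\<bar>x\<bar>) * E"
  proof -
    have a: "(1/k) * (E / cq) \<le> (1/(k*cq)) * (1+\<bar>x\<bar>) * E" using E k_pos cq_pos by (simp add: field_simps)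
    have b: "\<bar>c0\<bar> * (CQ / cq^2 * \<bar>x\<bar> * E) \<le> (\<bar>c0\<bar> * CQ / cq^2) * (1+\<bar>x\<bar>) * E"
    proof -
      have "\<bar>x\<bar> * E \<le> (1+\<bar>x\<bar>) * E" using E by (intro mult_right_mono) auto
      then have "(\<bar>c0\<bar> * CQ / cq^2) * (\<bar>x\<bar> * E) \<le> (\<bar>c0\<bar> * CQ / cq^2) * ((1+\<bar>x\<bar>) * E)"
        using CQ_pos cq_pos by (intro mult_left_mono) auto
      then show ?thesis by (simp add: algebra_simps)
    qed
    have c: "(1/(k*cq)) * (1+\<bar>x\<bar>) * E + (\<bar>c0\<bar> * CQ / cq^2) * (1+\<bar>x\<bar>) * E \<le> C2 * (1+\<bar>x\<bar>) * E"
    proof -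
      have "(1/(k*cq)) + (\<bar>c0\<bar> * CQ / cq^2) \<le> C2" unfolding C2_def using k_pos cq_pos CQ_pos by auto
      then have "((1/(k*cq)) + (\<bar>c0\<bar> * CQ / cq^2)) * ((1+\<bar>x\<bar>) * E) \<le> C2 * ((1+\<bar>x\<bar>) * E)"
        using E by (intro mult_right_mono) auto
      then show ?thesis by (simp add: algebra_simps)
    qed
    show ?thesis using a b c by linarith
  qed
  finally show ?thesis unfolding E_def .
qed

lemma d2_bnd: "\<bar>d2 x\<bar> \<le> C2 * (1+\<bar>x\<bar>) * exp \<bar>x\<bar>"
proof -
  define E where "E = exp \<bar>x\<bar>"
  have E: "E > 0" unfolding E_def by simp
  have iq: "\<bar>1 / Q x\<bar> \<le> E / cq" using iQ_le[of x] Q_pos[of x] unfolding E_def by simp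
  have t1: "\<bar>ph x / (k * Q x)\<bar> \<le> (1/k) * (E / cq)"
  proof -
    have "\<bar>ph x * (1/k) * (1 / Q x)\<bar> \<le> (1 * (1/k)) * (E / cq)"
    proof (rule abs_prod_le[OF _ iq])
      have "1/k > 0" using k_pos by simp
      then show "\<bar>ph x * (1 / k)\<bar> \<le> 1 * (1 / k)" using ph_le[of x] k_pos by (simp add: abs_mult divide_right_mono)
    qed
    then show ?thesis by (simp add: field_simps)
  qed
  have "\<bar>d1 x * S x\<bar> \<le> ((2*k+1) * CQ * exp (-\<bar>x\<bar>)) * (\<bar>x\<bar> * exp (2*\<bar>x\<bar>) / cq^2)"
    using abs_prod_le[OF d1_bnd[of x] S_bnd[of x]] .
  also have "\<dots> = (2*k+1) * CQ / cq^2 * \<bar>x\<bar> * E" unfolding E_def using exp_cancel[of x] by (simp add: field_simps)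
  finally have t2: "\<bar>d1 x * S x\<bar> \<le> (2*k+1) * CQ / cq^2 * \<bar>x\<bar> * E" .
  have t3: "\<bar>ph x / Q x\<bar> \<le> E / cq"
    using abs_prod_le[OF ph_le[of x] iq] by simp
  have t4: "\<bar>c0 * (d1 x * S x + ph x / Q x)\<bar> \<le> \<bar>c0\<bar> * ((2*k+1) * CQ / cq^2 * \<bar>x\<bar> * E + E / cq)"
    using t2 t3 abs_triangle_ineq[of "d1 x * S x" "ph x / Q x"] by (simp add: abs_mult mult_left_mono)
  have "\<bar>d2 x\<bar> \<le> (1/k) * (E / cq) + \<bar>c0\<bar> * ((2*k+1) * CQ / cq^2 * \<bar>x\<bar> * E + E / cq)"
    unfolding d2_def using t1 t4 abs_triangle_ineq4[of "ph x / (k * Q x)" "c0 * (d1 x * S x + ph x / Q x)"] by linarith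
  also have "\<dots> \<le> C2 * ((1+\<bar>x\<bar>) * E)"
  proof -
    have ax: "\<bar>x\<bar> \<le> 1 + \<bar>x\<bar>" "1 \<le> 1 + \<bar>x\<bar>" by auto
    have a: "(1/k) * (E / cq) \<le> (1/(k*cq)) * ((1+\<bar>x\<bar>) * E)" using E k_pos cq_pos ax by (simp add: field_simps)
    have b: "\<bar>c0\<bar> * ((2*k+1) * CQ / cq^2 * \<bar>x\<bar> * E) \<le> (\<bar>c0\<bar> * (2*k+1) * CQ / cq^2) * ((1+\<bar>x\<bar>) * E)"
    proof -
      have "\<bar>x\<bar> * E \<le> (1+\<bar>x\<bar>) * E" using E by (intro mult_right_mono) auto
      then have "(\<bar>c0\<bar> * (2*k+1) * CQ / cq^2) * (\<bar>x\<bar> * E) \<le> (\<bar>c0\<bar> * (2*k+1) * CQ / cq^2) * ((1+\<bar>x\<bar>) * E)"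
        using k_pos CQ_pos cq_pos by (intro mult_left_mono) auto
      then show ?thesis by (simp add: algebra_simps)
    qed
    have c: "\<bar>c0\<bar> * (E / cq) \<le> (\<bar>c0\<bar> / cq) * ((1+\<bar>x\<bar>) * E)"
    proof -
      have "1 * E \<le> (1+\<bar>x\<bar>) * E" using E by (intro mult_right_mono) auto
      then have "E \<le> (1+\<bar>x\<bar>) * E" by simp
      then have "(\<bar>c0\<bar> / cq) * E \<le> (\<bar>c0\<bar> / cq) * ((1+\<bar>x\<bar>) * E)"
        using cq_pos by (intro mult_left_mono) auto
      then show ?thesis by simp
    qed
    have d: "(1/(k*cq) + \<bar>c0\<bar> * (2*k+1) * CQ / cq^2 + \<bar>c0\<bar> / cq) * ((1+\<bar>x\<bar>) * E) \<le> C2 * ((1+\<bar>x\<bar>) * E)"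
    proof -
      have "1/(k*cq) + \<bar>c0\<bar> * (2*k+1) * CQ / cq^2 + \<bar>c0\<bar> / cq \<le> C2" unfolding C2_def using k_pos cq_pos CQ_pos by auto
      then show ?thesis using E by (intro mult_right_mono) auto
    qed
    have "(1/k) * (E / cq) + \<bar>c0\<bar> * ((2*k+1) * CQ / cq^2 * \<bar>x\<bar> * E + E / cq)
       = (1/k) * (E / cq) + \<bar>c0\<bar> * ((2*k+1) * CQ / cq^2 * \<bar>x\<bar> * E) + \<bar>c0\<bar> * (E / cq)" by (simp add: algebra_simps)
    moreover have "(1/(k*cq) + \<bar>c0\<bar> * (2*k+1) * CQ / cq^2 + \<bar>c0\<bar> / cq) * ((1+\<bar>x\<bar>) * E)
       = (1/(k*cq)) * ((1+\<bar>x\<bar>) * E) + (\<bar>c0\<bar> * (2*k+1) * CQ / cq^2) * ((1+\<bar>x\<bar>) * E) + (\<bar>c0\<bar> / cq) * ((1+\<bar>x\<bar>) * E)"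
      by (simp add: algebra_simps)
    ultimately show ?thesis using a b c d by linarith
  qed
  finally show ?thesis unfolding E_def by (simp add: mult.assoc)
qed

end


lemma YB_prod1:
  assumes "\<And>x. \<bar>f x\<bar> \<le> A * exp (-\<bar>x\<bar>)" "\<And>x. \<bar>g x\<bar> \<le> B * (1+\<bar>x\<bar>)^n"
  shows "YB (\<lambda>x. f x * g x)"
proof -
  have "\<bar>f x * g x\<bar> \<le> (A * B) * (1+\<bar>x\<bar>)^n * exp (-\<bar>x\<bar>)" for x
    using abs_prod_le[OF assms(1)[of x] assms(2)[of x]] by (simp add: algebra_simps)
  then show ?thesis unfolding YB_def by blast
qed

lemma YB_prod2:
  assumes "\<And>x. \<bar>f x\<bar> \<le> A * (1+\<bar>x\<bar>) * exp \<bar>x\<bar>" "\<And>x. \<bar>g x\<bar> \<le> B * (1+\<bar>x\<bar>)^n * exp (-2*\<bar>x\<bar>)"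
  shows "YB (\<lambda>x. f x * g x)"
proof -
  have "\<bar>f x * g x\<bar> \<le> (A * B) * (1+\<bar>x\<bar>)^(Suc n) * exp (-\<bar>x\<bar>)" for x
  proof -
    have "\<bar>f x * g x\<bar> \<le> (A * (1+\<bar>x\<bar>) * exp \<bar>x\<bar>) * (B * (1+\<bar>x\<bar>)^n * exp (-2*\<bar>x\<bar>))"
      by (rule abs_prod_le[OF assms(1)[of x] assms(2)[of x]])
    also have "\<dots> = (A * B) * (1+\<bar>x\<bar>)^(Suc n) * (exp \<bar>x\<bar> * exp (-2*\<bar>x\<bar>))" by (simp add: algebra_simps)
    also have "exp \<bar>x\<bar> * exp (-2*\<bar>x\<bar>) = exp (-\<bar>x\<bar>)" by (simp add: mult_exp_exp)
    finally show ?thesis .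
  qed
  then show ?thesis unfolding YB_def by blast
qed

lemma YB_minus: "YB f \<Longrightarrow> YB (\<lambda>x. - f x)" using YB_cmult[of f "-1"] by simp
lemma YB_diff: "YB f \<Longrightarrow> YB g \<Longrightarrow> YB (\<lambda>x. f x - g x)" using YB_add[OF _ YB_minus, of f g] by simp

lemma YB_bound: "YB f \<Longrightarrow> \<exists>K N. K \<ge> 0 \<and> (\<forall>x. \<bar>f x\<bar> \<le> K * (1+\<bar>x\<bar>)^N * exp(-\<bar>x\<bar>))"
proof -
  assume "YB f"
  then obtain K N where KN: "\<And>x. \<bar>f x\<bar> \<le> K * (1+\<bar>x\<bar>)^N * exp(-\<bar>x\<bar>)" unfolding YB_def by blast
  have "\<bar>f 0\<bar> \<le> K" using KN[of 0] by simp
  then have "K \<ge> 0" by (meson abs_ge_zero order_trans)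
  then show ?thesis using KN by blast
qed

context sol
begin

lemma solve:
  assumes h: "Yc h"
    and orth: "\<exists>G L. (\<forall>x. (G has_real_derivative y1 x * h x) (at x)) \<and> (G \<longlongrightarrow> L) at_top \<and> (G \<longlongrightarrow> L) at_bot"
  shows "\<exists>u. Yc u \<and> (\<forall>x. - deriv (deriv u) x + u x - V x * u x = h x) \<and>
          ((\<forall>x. h (-x) = h x) \<longrightarrow> (\<forall>x. u (-x) = u x)) \<and>
          ((\<forall>x. h (-x) = - h x) \<longrightarrow> (\<forall>x. u (-x) = - u x))"
proof -
  obtain K N where K: "K \<ge> 0" and hb: "\<And>x. \<bar>h x\<bar> \<le> K * (1+\<bar>x\<bar>)^N * exp(-\<bar>x\<bar>)"
    using YB_bound[OF Yc_YB[OF h]] by blast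
  obtain G L where G: "\<And>x. (G has_real_derivative y1 x * h x) (at x)" and GL: "(G \<longlongrightarrow> L) at_top" "(G \<longlongrightarrow> L) at_bot"
    using orth by blast
  define G0 where "G0 x = G x - G 0" for x
  define L0 where "L0 = L - G 0"
  have G0: "(G0 has_real_derivative y1 x * h x) (at x)" for x
    unfolding G0_def[abs_def] by (auto intro!: derivative_eq_intros G)
  have G00: "G0 0 = 0" unfolding G0_def by simp
  have G0L: "(G0 \<longlongrightarrow> L0) at_top" "(G0 \<longlongrightarrow> L0) at_bot"
    unfolding G0_def[abs_def] L0_def using GL by (auto intro!: tendsto_intros)
  have y1hb: "\<bar>y1 t * h t\<bar> \<le> (CQ * K) * (1+\<bar>t\<bar>)^N * exp(-2*\<bar>t\<bar>)" for t
  proof -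
    have "\<bar>y1 t * h t\<bar> \<le> (CQ * exp (-\<bar>t\<bar>)) * (K * (1+\<bar>t\<bar>)^N * exp(-\<bar>t\<bar>))"
      by (rule abs_prod_le[OF y1_bnd hb])
    also have "\<dots> = (CQ * K) * (1+\<bar>t\<bar>)^N * (exp (-\<bar>t\<bar>) * exp(-\<bar>t\<bar>))" by (simp add: algebra_simps)
    also have "exp (-\<bar>t\<bar>) * exp(-\<bar>t\<bar>) = exp(-2*\<bar>t\<bar>)" by (simp add: mult_exp_exp)
    finally show ?thesis .
  qed
  obtain Lp Lm C where T: "(G0 \<longlongrightarrow> Lp) at_top" "(G0 \<longlongrightarrow> Lm) at_bot"
     "\<forall>x\<ge>0. \<bar>G0 x - Lp\<bar> \<le> (CQ * K) * C * (1+x)^N * exp(-2*x)"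
     "\<forall>x\<le>0. \<bar>G0 x - Lm\<bar> \<le> (CQ * K) * C * (1+\<bar>x\<bar>)^N * exp(-2*\<bar>x\<bar>)"
    using tail2[OF G0 _, of "CQ * K" N 2] y1hb by auto
  have "Lp = L0" using tendsto_unique[OF _ T(1) G0L(1)] by simp
  moreover have "Lm = L0" using tendsto_unique[OF _ T(2) G0L(2)] by simp
  ultimately have Jb: "\<bar>L0 - G0 x\<bar> \<le> (CQ * K * C) * (1+\<bar>x\<bar>)^N * exp(-2*\<bar>x\<bar>)" for x
    using T(3,4) by (cases "x \<ge> 0") (auto simp: abs_minus_commute)
  define J where "J x = L0 - G0 x" for x
  have J: "(J has_real_derivative - (y1 x * h x)) (at x)" for x
    unfolding J_def[abs_def] by (auto intro!: derivative_eq_intros G0)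
  have Jb': "\<bar>J x\<bar> \<le> (CQ * K * C) * (1+\<bar>x\<bar>)^N * exp(-2*\<bar>x\<bar>)" for x unfolding J_def by (rule Jb)
  have y2h_cont: "continuous_on UNIV (\<lambda>x. y2 x * h x)"
  proof -
    have "continuous_on UNIV y2" by (intro continuous_at_imp_continuous_on ballI DERIV_isCont[OF y2_deriv])
    then show ?thesis by (intro continuous_intros Dif_cont[OF Yc_Dif[OF h]])
  qed
  obtain I2 where I2: "\<And>x. (I2 has_real_derivative y2 x * h x) (at x)" and I20: "I2 0 = 0"
    using antideriv[OF y2h_cont] by blast
  have y2hb: "\<bar>y2 t * h t\<bar> \<le> (C2 * K) * (1+\<bar>t\<bar>)^(Suc N)" for t
  proof -
    have "\<bar>y2 t * h t\<bar> \<le> (C2 * (1+\<bar>t\<bar>) * exp \<bar>t\<bar>) * (K * (1+\<bar>t\<bar>)^N * exp(-\<bar>t\<bar>))"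
      by (rule abs_prod_le[OF y2_bnd hb])
    also have "\<dots> = (C2 * K) * (1+\<bar>t\<bar>)^(Suc N) * (exp \<bar>t\<bar> * exp(-\<bar>t\<bar>))" by (simp add: algebra_simps)
    also have "exp \<bar>t\<bar> * exp(-\<bar>t\<bar>) = 1" by (simp add: mult_exp_exp)
    finally show ?thesis by simp
  qed
  have I2b: "\<bar>I2 x\<bar> \<le> (C2 * K) * (1+\<bar>x\<bar>)^(Suc (Suc N))" for x
  proof -
    have "\<bar>I2 x - I2 0\<bar> \<le> ((C2 * K) * (1+\<bar>x\<bar>)^(Suc N)) * \<bar>x\<bar>"
    proof (rule mvt_abs0[OF I2])
      fix t :: real assume t: "\<bar>t\<bar> \<le> \<bar>x\<bar>"
      have "(1+\<bar>t\<bar>)^(Suc N) \<le> (1+\<bar>x\<bar>)^(Suc N)" using t by (intro power_mono) auto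
      then have "(C2 * K) * (1+\<bar>t\<bar>)^(Suc N) \<le> (C2 * K) * (1+\<bar>x\<bar>)^(Suc N)"
        using C2_nonneg K by (intro mult_left_mono) auto
      then show "\<bar>y2 t * h t\<bar> \<le> (C2 * K) * (1+\<bar>x\<bar>)^(Suc N)" using y2hb[of t] by linarith
    qed
    also have "\<dots> \<le> ((C2 * K) * (1+\<bar>x\<bar>)^(Suc N)) * (1+\<bar>x\<bar>)"
      using C2_nonneg K by (intro mult_left_mono) auto
    finally show ?thesis using I20 by (simp add: algebra_simps)
  qed
  define u where "u x = - (y1 x * I2 x) - y2 x * J x" for x
  define u1 where "u1 x = - (d1 x * I2 x) - d2 x * J x" for x
  have du: "(u has_real_derivative u1 x) (at x)" for x
  proof -
    have "(u has_real_derivative - (d1 x * I2 x + (y2 x * h x) * y1 x) - (d2 x * J x + (- (y1 x * h x)) * y2 x)) (at x)"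
      unfolding u_def[abs_def] by (rule DERIV_diff[OF DERIV_minus[OF DERIV_mult[OF y1_deriv I2]] DERIV_mult[OF y2_deriv J]])
    then show ?thesis unfolding u1_def by (simp add: algebra_simps)
  qed
  have du1: "(u1 has_real_derivative u x * (1 - V x) - h x) (at x)" for x
  proof -
    have "(u1 has_real_derivative - (dd1 x * I2 x + (y2 x * h x) * d1 x) - (dd2 x * J x + (- (y1 x * h x)) * d2 x)) (at x)"
      unfolding u1_def[abs_def] by (rule DERIV_diff[OF DERIV_minus[OF DERIV_mult[OF d1_deriv I2]] DERIV_mult[OF d2_deriv J]])
    moreover have "- (dd1 x * I2 x + (y2 x * h x) * d1 x) - (dd2 x * J x + (- (y1 x * h x)) * d2 x)
        = u x * (1 - V x) - h x * (-(y1 x * d2 x - d1 x * y2 x))"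
      unfolding u_def L_y1 L_y2 by (simp add: algebra_simps)
    ultimately show ?thesis unfolding wronsk by simp
  qed
  have Bu: "YB u"
  proof -
    have a: "YB (\<lambda>x. y1 x * I2 x)" by (rule YB_prod1[OF y1_bnd I2b])
    have b: "YB (\<lambda>x. y2 x * J x)" by (rule YB_prod2[OF y2_bnd Jb'])
    show ?thesis unfolding u_def[abs_def] by (rule YB_diff[OF YB_minus[OF a] b])
  qed
  have Bu1: "YB u1"
  proof -
    have a: "YB (\<lambda>x. d1 x * I2 x)" by (rule YB_prod1[OF d1_bnd I2b])
    have b: "YB (\<lambda>x. d2 x * J x)" by (rule YB_prod2[OF d2_bnd Jb'])
    show ?thesis unfolding u1_def[abs_def] by (rule YB_diff[OF YB_minus[OF a] b])
  qed
  have W: "Pc (\<lambda>x. 1 - V x)" by (rule Pc_diff[OF Pc_const Pc_V])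
  have Yu: "Yc u" by (rule ode_Yc[OF du du1 Bu Bu1 h W])
  have Du: "deriv u = u1" by (rule deriv_eqI, rule du)
  have Du1: "deriv u1 = (\<lambda>x. u x * (1 - V x) - h x)" by (rule deriv_eqI, rule du1)
  have eq: "- deriv (deriv u) x + u x - V x * u x = h x" for x
    unfolding Du Du1 by (simp add: algebra_simps)
  have ev: "u (-x) = u x" if he: "\<forall>x. h (-x) = h x" for x
  proof -
    have he': "h (-t) = h t" for t using he by blast
    have G0e: "G0 (-t) = G0 t" for t by (rule even_from_deriv[OF G0]) (simp only: y1_odd he' mult_minus_left)
    have I2o: "I2 (-t) = - I2 t" for t by (rule odd_from_deriv[OF I2 _ I20]) (simp only: y2_even he')
    show ?thesis unfolding u_def J_def G0e I2o y1_odd y2_even by simp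
  qed
  have od: "u (-x) = - u x" if ho: "\<forall>x. h (-x) = - h x" for x
  proof -
    have ho': "h (-t) = - h t" for t using ho by blast
    have G0o: "G0 (-t) = - G0 t" for t by (rule odd_from_deriv[OF G0 _ G00]) (simp only: y1_odd ho' mult_minus_left mult_minus_right minus_minus)
    have t1: "((\<lambda>x. G0 (-x)) \<longlongrightarrow> L0) at_top" using G0L(2) unfolding filterlim_at_bot_mirror .
    have t2: "((\<lambda>x. - G0 x) \<longlongrightarrow> L0) at_top" using t1 unfolding G0o .
    have t4: "(G0 \<longlongrightarrow> - L0) at_top" using tendsto_minus[OF t2] by simp
    have "L0 = - L0" by (rule tendsto_unique[OF trivial_limit_at_top_linorder G0L(1) t4])
    then have L00: "L0 = 0" by simp
    have I2e: "I2 (-t) = I2 t" for t by (rule even_from_deriv[OF I2]) (simp only: y2_even ho' mult_minus_right)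
    show ?thesis unfolding u_def J_def G0o I2e y1_odd y2_even L00 by simp
  qed
  show ?thesis using Yu eq ev od by blast
qed

lemma orth_even:
  assumes h: "Yc h" and he: "\<And>x. h (-x) = h x"
  shows "\<exists>G L. (\<forall>x. (G has_real_derivative y1 x * h x) (at x)) \<and> (G \<longlongrightarrow> L) at_top \<and> (G \<longlongrightarrow> L) at_bot"
proof -
  obtain K N where K: "K \<ge> 0" and hb: "\<And>x. \<bar>h x\<bar> \<le> K * (1+\<bar>x\<bar>)^N * exp(-\<bar>x\<bar>)"
    using YB_bound[OF Yc_YB[OF h]] by blast
  have cont: "continuous_on UNIV (\<lambda>x. y1 x * h x)"
  proof -
    have "continuous_on UNIV y1" by (intro continuous_at_imp_continuous_on ballI DERIV_isCont[OF y1_deriv])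
    then show ?thesis by (intro continuous_intros Dif_cont[OF Yc_Dif[OF h]])
  qed
  obtain G where G: "\<And>x. (G has_real_derivative y1 x * h x) (at x)" and G0: "G 0 = 0"
    using antideriv[OF cont] by blast
  have y1hb: "\<bar>y1 t * h t\<bar> \<le> (CQ * K) * (1+\<bar>t\<bar>)^N * exp(-2*\<bar>t\<bar>)" for t
  proof -
    have "\<bar>y1 t * h t\<bar> \<le> (CQ * exp (-\<bar>t\<bar>)) * (K * (1+\<bar>t\<bar>)^N * exp(-\<bar>t\<bar>))"
      by (rule abs_prod_le[OF y1_bnd hb])
    also have "\<dots> = (CQ * K) * (1+\<bar>t\<bar>)^N * (exp (-\<bar>t\<bar>) * exp(-\<bar>t\<bar>))" by (simp add: algebra_simps)
    also have "exp (-\<bar>t\<bar>) * exp(-\<bar>t\<bar>) = exp(-2*\<bar>t\<bar>)" by (simp add: mult_exp_exp)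
    finally show ?thesis .
  qed
  obtain Lp Lm C where T: "(G \<longlongrightarrow> Lp) at_top" "(G \<longlongrightarrow> Lm) at_bot"
    using tail2[OF G y1hb] by auto
  have Ge: "G (-t) = G t" for t by (rule even_from_deriv[OF G]) (simp only: y1_odd he mult_minus_left)
  have "((\<lambda>x. G (-x)) \<longlongrightarrow> Lm) at_top" using T(2) unfolding filterlim_at_bot_mirror .
  then have "(G \<longlongrightarrow> Lm) at_top" unfolding Ge .
  then have "Lm = Lp" by (rule tendsto_unique[OF trivial_limit_at_top_linorder _ T(1)])
  then show ?thesis using G T by blast
qed

end


section \<open>Polynomial antiderivative and (1 - D^2)^{-1}\<close>

lemma pderiv_sum: "pderiv (sum f A) = (\<Sum>x\<in>A. pderiv (f x))"
  using higher_pderiv_sum[of 1 f A] by simp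

definition pint :: "real poly \<Rightarrow> real poly" where
  "pint R = (\<Sum>i\<le>degree R. monom (coeff R i / real (Suc i)) (Suc i))"

lemma pderiv_pint: "pderiv (pint R) = R"
proof -
  have "pderiv (pint R) = (\<Sum>i\<le>degree R. monom (coeff R i) i)"
    unfolding pint_def pderiv_sum pderiv_monom by (intro sum.cong) (auto simp del: of_nat_Suc)
  then show ?thesis by (simp add: poly_as_sum_of_monoms)
qed

lemma pint_0_at: "poly (pint R) 0 = 0"
  unfolding pint_def by (simp add: poly_sum poly_monom)

lemma degree_pint: "degree (pint R) \<le> degree R + 1"
  unfolding pint_def by (intro degree_sum_le) (auto intro: order.trans[OF degree_monom_le])

lemma pint_zero: "pint 0 = 0" unfolding pint_def by simp

lemma degree_hpderiv: "degree ((pderiv^^m) (P::real poly)) = degree P - m"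
  by (induction m) (auto simp: degree_pderiv)

lemma hpderiv_zero: "m > degree (P::real poly) \<Longrightarrow> (pderiv^^m) P = 0"
proof -
  assume m: "m > degree P"
  then obtain j where j: "m = Suc j" "j \<ge> degree P" by (cases m) auto
  have "degree ((pderiv^^j) P) = 0" using j by (simp add: degree_hpderiv)
  then have "pderiv ((pderiv^^j) P) = 0" using pderiv_eq_0_iff by blast
  then show ?thesis using j by simp
qed

definition psolve :: "real poly \<Rightarrow> real poly" where
  "psolve R = (\<Sum>i\<le>degree R. (pderiv^^(2*i)) R)"

lemma psolve_eq: "psolve R - pderiv (pderiv (psolve R)) = R"
proof -
  define f where "f i = (pderiv^^(2*i)) R" for i
  have d: "pderiv (pderiv (f i)) = f (Suc i)" for i
    unfolding f_def by (simp add: funpow_Suc_right[symmetric] del: funpow.simps) (simp only: funpow.simps o_apply)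
  have "psolve R - pderiv (pderiv (psolve R)) = (\<Sum>i<Suc (degree R). f i - f (Suc i))"
    unfolding psolve_def f_def[symmetric] pderiv_sum d by (simp add: sum_subtractf lessThan_Suc_atMost)
  also have "\<dots> = f 0 - f (Suc (degree R))" by (rule sum_lessThan_telescope')
  also have "f (Suc (degree R)) = 0" unfolding f_def by (rule hpderiv_zero) simp
  finally show ?thesis unfolding f_def by simp
qed

lemma degree_psolve: "degree (psolve R) \<le> degree R"
  unfolding psolve_def by (intro degree_sum_le) (auto simp: degree_hpderiv)

lemma psolve_zero: "psolve 0 = 0" unfolding psolve_def by simp

lemma psolve_const: "psolve [:c:] = [:c:]" unfolding psolve_def by simp

lemma poly_even_pderiv: "even_fun (poly P) \<Longrightarrow> odd_fun (poly (pderiv P))"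
  unfolding even_fun_def odd_fun_def using deriv_even_odd[OF Dif_poly, of P]
  by (simp add: deriv_poly_fun)
lemma poly_odd_pderiv: "odd_fun (poly P) \<Longrightarrow> even_fun (poly (pderiv P))"
  unfolding even_fun_def odd_fun_def using deriv_odd_even[OF Dif_poly, of P]
  by (simp add: deriv_poly_fun)

lemma pint_deriv: "(poly (pint R) has_real_derivative poly R x) (at x)"
  using poly_DERIV[of "pint R" x] by (simp add: pderiv_pint)

lemma pint_odd: "odd_fun (poly R) \<Longrightarrow> even_fun (poly (pint R))"
  unfolding even_fun_def odd_fun_def
  by (intro allI even_from_deriv[where g="poly R"] pint_deriv) auto
lemma pint_even: "even_fun (poly R) \<Longrightarrow> odd_fun (poly (pint R))"
  unfolding even_fun_def odd_fun_def
  by (intro allI odd_from_deriv[where g="poly R"] pint_deriv) (auto simp: pint_0_at)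

lemma hpderiv2_even: "even_fun (poly R) \<Longrightarrow> even_fun (poly ((pderiv^^(2*i)) R))"
  by (induction i) (auto simp: poly_even_pderiv poly_odd_pderiv)
lemma hpderiv2_odd: "odd_fun (poly R) \<Longrightarrow> odd_fun (poly ((pderiv^^(2*i)) R))"
  by (induction i) (auto simp: poly_even_pderiv poly_odd_pderiv)

lemma psolve_even: "even_fun (poly R) \<Longrightarrow> even_fun (poly (psolve R))"
  using hpderiv2_even[of R] unfolding psolve_def even_fun_def by (simp add: poly_sum)
lemma psolve_odd: "odd_fun (poly R) \<Longrightarrow> odd_fun (poly (psolve R))"
  using hpderiv2_odd[of R] unfolding psolve_def odd_fun_def by (simp add: poly_sum sum_negf)


lemma YB_tendsto0: assumes "YB f" shows "(f \<longlongrightarrow> 0) at_top" "(f \<longlongrightarrow> 0) at_bot"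
proof -
  obtain K N where K: "K \<ge> 0" and b: "\<And>x. \<bar>f x\<bar> \<le> K * (1+\<bar>x\<bar>)^N * exp(-\<bar>x\<bar>)"
    using YB_bound[OF assms] by blast
  have d: "((\<lambda>x. K * ((1+x)^N * exp(-1*x))) \<longlongrightarrow> 0) at_top"
    using tendsto_mult[OF tendsto_const[of K] decay_lim[of 1 N]] by simp
  have e1: "eventually (\<lambda>x. norm (f x) \<le> K * ((1+x)^N * exp(-1*x))) at_top"
  proof (rule eventually_mono[OF eventually_ge_at_top[of 0]])
    fix x :: real assume "0 \<le> x" then show "norm (f x) \<le> K * ((1+x)^N * exp(-1*x))" using b[of x] by (simp add: mult.assoc)
  qed
  show "(f \<longlongrightarrow> 0) at_top" by (rule Lim_null_comparison[OF e1 d])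
  have e2: "eventually (\<lambda>x. norm (f (-x)) \<le> K * ((1+x)^N * exp(-1*x))) at_top"
  proof (rule eventually_mono[OF eventually_ge_at_top[of 0]])
    fix x :: real assume "0 \<le> x" then show "norm (f (-x)) \<le> K * ((1+x)^N * exp(-1*x))" using b[of "-x"] by (simp add: mult.assoc)
  qed
  have "((\<lambda>x. f (-x)) \<longlongrightarrow> 0) at_top" by (rule Lim_null_comparison[OF e2 d])
  then show "(f \<longlongrightarrow> 0) at_bot" unfolding filterlim_at_bot_mirror .
qed

context sol
begin

lemma lim_exists:
  assumes g: "YB g" "continuous_on UNIV g"
  shows "\<exists>G Lp Lm. (\<forall>x. (G has_real_derivative g x) (at x)) \<and> G 0 = 0 \<and> (G \<longlongrightarrow> Lp) at_top \<and> (G \<longlongrightarrow> Lm) at_bot"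
proof -
  obtain K N where K: "K \<ge> 0" and b: "\<And>x. \<bar>g x\<bar> \<le> K * (1+\<bar>x\<bar>)^N * exp(-\<bar>x\<bar>)"
    using YB_bound[OF g(1)] by blast
  obtain G where G: "\<And>x. (G has_real_derivative g x) (at x)" and G0: "G 0 = 0" using antideriv[OF g(2)] by blast
  have b': "\<bar>g t\<bar> \<le> K * (1+\<bar>t\<bar>)^N * exp(-1*\<bar>t\<bar>)" for t using b[of t] by simp
  show ?thesis using tail2[OF G b'] G G0 by auto
qed

lemma Int_odd:
  assumes g: "Yc g" and go: "\<And>x. g (-x) = - g x"
  shows "\<exists>w. Yc w \<and> (\<forall>x. w (-x) = w x) \<and> (\<forall>x. (w has_real_derivative g x) (at x))"
proof -
  obtain K N where K: "K \<ge> 0" and b: "\<And>x. \<bar>g x\<bar> \<le> K * (1+\<bar>x\<bar>)^N * exp(-\<bar>x\<bar>)"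
    using YB_bound[OF Yc_YB[OF g]] by blast
  obtain G where G: "\<And>x. (G has_real_derivative g x) (at x)" and G0: "G 0 = 0"
    using antideriv[OF Dif_cont[OF Yc_Dif[OF g]]] by blast
  have b': "\<bar>g t\<bar> \<le> K * (1+\<bar>t\<bar>)^N * exp(-1*\<bar>t\<bar>)" for t using b[of t] by simp
  obtain Lp Lm C where T: "(G \<longlongrightarrow> Lp) at_top" "(G \<longlongrightarrow> Lm) at_bot"
     "\<forall>x\<ge>0. \<bar>G x - Lp\<bar> \<le> K * C * (1+x)^N * exp(-1*x)"
     "\<forall>x\<le>0. \<bar>G x - Lm\<bar> \<le> K * C * (1+\<bar>x\<bar>)^N * exp(-1*\<bar>x\<bar>)"
    using tail2[OF G b'] by auto
  have Ge: "G (-t) = G t" for t by (rule even_from_deriv[OF G go])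
  have "((\<lambda>x. G (-x)) \<longlongrightarrow> Lm) at_top" using T(2) unfolding filterlim_at_bot_mirror .
  then have "(G \<longlongrightarrow> Lm) at_top" unfolding Ge .
  then have LL: "Lm = Lp" by (rule tendsto_unique[OF trivial_limit_at_top_linorder _ T(1)])
  define w where "w x = G x - Lp" for x
  have dw: "(w has_real_derivative g x) (at x)" for x unfolding w_def[abs_def] by (auto intro!: derivative_eq_intros G)
  have "\<bar>w x\<bar> \<le> (K * C) * (1+\<bar>x\<bar>)^N * exp(-\<bar>x\<bar>)" for x
  proof (cases "x \<ge> 0")
    case True
    then have "\<bar>G x - Lp\<bar> \<le> K * C * (1+x)^N * exp(-1*x)" using T(3) by blast
    then show ?thesis unfolding w_def using True by simp
  next
    case False
    then have "\<bar>G x - Lm\<bar> \<le> K * C * (1+\<bar>x\<bar>)^N * exp(-1*\<bar>x\<bar>)" using T(4) by simp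
    then show ?thesis unfolding w_def LL by simp
  qed
  then have Bw: "YB w" unfolding YB_def by blast
  have Dw: "deriv w = g" by (rule deriv_eqI[OF dw])
  have "Yc w" by (rule Yc_I[OF Dif_I[OF dw] Bw]) (simp only: Dw g)
  moreover have "w (-x) = w x" for x unfolding w_def Ge ..
  ultimately show ?thesis using dw by blast
qed

lemma ph_nonneg: "x \<ge> 0 \<Longrightarrow> ph x \<ge> 0"
  unfolding ph_def' using k_pos by (simp add: tanh_real_nonneg_iff)

lemma one_minus_ph: "x \<ge> 0 \<Longrightarrow> 1 - ph x \<le> 1 - ph x ^ 2"
proof -
  assume x: "x \<ge> 0"
  have "ph x ^ 2 \<le> ph x" using ph_nonneg[OF x] ph_le[of x] by (simp add: power2_eq_square mult_left_le)
  then show ?thesis by simp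
qed

lemma Int_even:
  assumes g: "Yc g" and ge: "\<And>x. g (-x) = g x"
  shows "\<exists>w l. Yc w \<and> (\<forall>x. w (-x) = - w x) \<and> (\<forall>x. (w has_real_derivative g x - l * (k * (1 - ph x ^ 2))) (at x))"
proof -
  obtain K N where K: "K \<ge> 0" and b: "\<And>x. \<bar>g x\<bar> \<le> K * (1+\<bar>x\<bar>)^N * exp(-\<bar>x\<bar>)"
    using YB_bound[OF Yc_YB[OF g]] by blast
  obtain G where G: "\<And>x. (G has_real_derivative g x) (at x)" and G0: "G 0 = 0"
    using antideriv[OF Dif_cont[OF Yc_Dif[OF g]]] by blast
  have b': "\<bar>g t\<bar> \<le> K * (1+\<bar>t\<bar>)^N * exp(-1*\<bar>t\<bar>)" for t using b[of t] by simp
  obtain Lp Lm C where T: "(G \<longlongrightarrow> Lp) at_top" "(G \<longlongrightarrow> Lm) at_bot"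
     "\<forall>x\<ge>0. \<bar>G x - Lp\<bar> \<le> K * C * (1+x)^N * exp(-1*x)"
     "\<forall>x\<le>0. \<bar>G x - Lm\<bar> \<le> K * C * (1+\<bar>x\<bar>)^N * exp(-1*\<bar>x\<bar>)"
    using tail2[OF G b'] by auto
  have Go: "G (-t) = - G t" for t by (rule odd_from_deriv[OF G ge G0])
  have "((\<lambda>x. G (-x)) \<longlongrightarrow> Lm) at_top" using T(2) unfolding filterlim_at_bot_mirror .
  then have "((\<lambda>x. - G x) \<longlongrightarrow> Lm) at_top" unfolding Go .
  then have "(G \<longlongrightarrow> - Lm) at_top" using tendsto_minus[of "\<lambda>x. - G x" Lm at_top] by simp
  then have LL: "Lm = - Lp" using tendsto_unique[OF trivial_limit_at_top_linorder _ T(1)] by fastforce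
  define w where "w x = G x - Lp * ph x" for x
  have dw: "(w has_real_derivative g x - Lp * (k * (1 - ph x ^ 2))) (at x)" for x
    unfolding w_def[abs_def] by (auto intro!: derivative_eq_intros G ph_deriv)
  have "\<bar>w x\<bar> \<le> (K * C + 4 * \<bar>Lp\<bar>) * (1+\<bar>x\<bar>)^N * exp(-\<bar>x\<bar>)" for x
  proof -
    have e4: "\<bar>Lp\<bar> * (1 - ph x ^ 2) \<le> \<bar>Lp\<bar> * (4 * exp (-\<bar>x\<bar>))" by (intro mult_left_mono s_le) auto
    have p1: "4 * exp (-\<bar>x\<bar>) \<le> 4 * (1+\<bar>x\<bar>)^N * exp(-\<bar>x\<bar>)"
    proof -
      have "1 \<le> (1+\<bar>x\<bar>)^N" by simp
      then have "4 * exp (-\<bar>x\<bar>) * 1 \<le> 4 * exp (-\<bar>x\<bar>) * (1+\<bar>x\<bar>)^N" by (intro mult_left_mono) auto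
      then show ?thesis by (simp add: algebra_simps)
    qed
    have main: "\<bar>w x\<bar> \<le> K * C * (1+\<bar>x\<bar>)^N * exp(-\<bar>x\<bar>) + \<bar>Lp\<bar> * (1 - ph x ^ 2)"
    proof (cases "x \<ge> 0")
      case True
      have "w x = (G x - Lp) + Lp * (1 - ph x)" unfolding w_def by (simp add: algebra_simps)
      moreover have "\<bar>Lp * (1 - ph x)\<bar> \<le> \<bar>Lp\<bar> * (1 - ph x ^ 2)"
        using one_minus_ph[OF True] ph_le[of x] by (simp add: abs_mult mult_left_mono)
      moreover have "\<bar>G x - Lp\<bar> \<le> K * C * (1+\<bar>x\<bar>)^N * exp(-\<bar>x\<bar>)" using T(3) True by simp
      ultimately show ?thesis using abs_triangle_ineq[of "G x - Lp" "Lp * (1 - ph x)"] by linarith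
    next
      case False
      have "w x = (G x - Lm) - Lp * (1 + ph x)" unfolding w_def LL by (simp add: algebra_simps)
      moreover have "1 + ph x \<le> 1 - ph x ^ 2"
        using one_minus_ph[of "-x"] False by (simp add: ph_minus)
      moreover have "0 \<le> 1 + ph x" using ph_le[of x] by (simp add: abs_le_iff)
      ultimately have "\<bar>Lp * (1 + ph x)\<bar> \<le> \<bar>Lp\<bar> * (1 - ph x ^ 2)" "w x = (G x - Lm) - Lp * (1 + ph x)"
        by (auto simp: abs_mult mult_left_mono)
      moreover have "\<bar>G x - Lm\<bar> \<le> K * C * (1+\<bar>x\<bar>)^N * exp(-\<bar>x\<bar>)" using T(4) False by simp
      ultimately show ?thesis using abs_triangle_ineq4[of "G x - Lm" "Lp * (1 + ph x)"] by linarith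
    qed
    have "\<bar>Lp\<bar> * (1 - ph x ^ 2) \<le> 4 * \<bar>Lp\<bar> * (1+\<bar>x\<bar>)^N * exp(-\<bar>x\<bar>)"
      using e4 p1 mult_left_mono[OF p1, of "\<bar>Lp\<bar>"] by (simp add: algebra_simps)
    then show ?thesis using main by (simp add: algebra_simps)
  qed
  then have Bw: "YB w" unfolding YB_def by blast
  have Dw: "deriv w = (\<lambda>x. g x - Lp * (k * (1 - ph x ^ 2)))" by (rule deriv_eqI[OF dw])
  have Yd: "Yc (\<lambda>x. g x - Lp * (k * (1 - ph x ^ 2)))"
    using Yc_diff[OF g Yc_cmult[OF Yc_s, of "Lp * k"]] by (simp add: mult.assoc)
  have "Yc w" by (rule Yc_I[OF Dif_I[OF dw] Bw]) (simp only: Dw Yd)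
  moreover have "w (-x) = - w x" for x unfolding w_def Go ph_minus by simp
  ultimately show ?thesis using dw by blast
qed

end


lemma x_mult_deriv: assumes "(f has_real_derivative D) (at x)" shows "((\<lambda>x. x * f x) has_real_derivative f x + x * D) (at x)"
  using DERIV_mult[OF DERIV_ident assms] by (simp add: algebra_simps)

context sol
begin

definition Qdd :: "real \<Rightarrow> real" where "Qdd x = Q x * ph x ^ 2 - Q x * (k * (1 - ph x ^ 2))"
lemma Qd_deriv: "((\<lambda>x. - (Q x * ph x)) has_real_derivative Qdd x) (at x)"
  unfolding Qdd_def by (auto intro!: derivative_eq_intros Q_deriv ph_deriv simp: algebra_simps power2_eq_square)

definition A1 :: "real \<Rightarrow> real" where "A1 x = Q x / (2*k) - 3/2 * (x * y1 x)"
definition A1d :: "real \<Rightarrow> real" where "A1d x = - y1 x / (2*k) - 3/2 * y1 x - 3/2 * (x * d1 x)"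
definition A1dd :: "real \<Rightarrow> real" where "A1dd x = - d1 x / (2*k) - 3 * d1 x - 3/2 * (x * dd1 x)"

lemma A1_deriv: "(A1 has_real_derivative A1d x) (at x)"
proof -
  have "(A1 has_real_derivative (- (Q x * ph x)) / (2*k) - 3/2 * (y1 x + x * d1 x)) (at x)"
    unfolding A1_def[abs_def] by (intro DERIV_diff DERIV_cdivide Q_deriv DERIV_cmult x_mult_deriv y1_deriv)
  then show ?thesis unfolding A1d_def y1_def by (simp add: algebra_simps)
qed

lemma A1d_deriv: "(A1d has_real_derivative A1dd x) (at x)"
proof -
  have "(A1d has_real_derivative - d1 x / (2*k) - 3/2 * d1 x - 3/2 * (d1 x + x * dd1 x)) (at x)"
    unfolding A1d_def[abs_def] by (intro DERIV_diff DERIV_cdivide DERIV_minus DERIV_cmult y1_deriv x_mult_deriv d1_deriv)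
  then show ?thesis unfolding A1dd_def by (simp add: algebra_simps)
qed

lemma Qp_pow: "Q x ^ p = Q x * ((k+1) * (1 - ph x ^ 2))"
proof -
  have "Q x ^ p = Q x * Q x ^ (p-1)" using p_ge by (metis Suc_diff_1 not_numeral_le_zero not_gr0 power_Suc)
  then show ?thesis unfolding Q_pow .
qed

lemma L_A1: "- A1dd x + A1 x - V x * A1 x = - (3 * Q x - 2 * Q x ^ p)"
  unfolding A1dd_def A1_def Qp_pow L_y1 y1_def d1_def V_alt using k_pos
  by (simp add: field_simps power2_eq_square)

lemma Yc_A1: "Yc A1"
proof -
  have "Yc (\<lambda>x. Q x / (2*k) - 3/2 * (x * (Q x * ph x)))"
    using Yc_diff[OF Yc_cmult[OF Yc_Q, of "1/(2*k)"] Yc_cmult[OF Yc_mult'[OF Pc_poly[of "[:0,1:]"] Yc_QR[of "[:0,1:]"]], of "3/2"]]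
    by simp
  then show ?thesis unfolding A1_def[abs_def] y1_def by simp
qed
lemma A1_even: "A1 (-x) = A1 x" unfolding A1_def y1_def Q_minus ph_minus by simp

definition Wq :: "real \<Rightarrow> real" where
  "Wq = (SOME G. (\<forall>x. (G has_real_derivative Q x) (at x)) \<and> G 0 = 0)"
lemma Wq_prop: "(\<forall>x. (Wq has_real_derivative Q x) (at x)) \<and> Wq 0 = 0"
proof -
  have "\<exists>G. (\<forall>x. (G has_real_derivative Q x) (at x)) \<and> G 0 = 0"
    by (rule antideriv, rule Dif_cont, rule Dif_Q)
  then show ?thesis unfolding Wq_def by (rule someI_ex)
qed
lemma Wq_deriv: "(Wq has_real_derivative Q x) (at x)" using Wq_prop by blast
lemma Wq0: "Wq 0 = 0" using Wq_prop by blast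
lemma Wq_bnd: "\<bar>Wq x\<bar> \<le> CQ * (1+\<bar>x\<bar>)"
proof -
  have "\<bar>Wq x - Wq 0\<bar> \<le> CQ * \<bar>x\<bar>"
  proof (rule mvt_abs0[OF Wq_deriv])
    fix t :: real assume "\<bar>t\<bar> \<le> \<bar>x\<bar>"
    have "Q t \<le> CQ * exp (-\<bar>t\<bar>)" by (rule Q_le')
    also have "\<dots> \<le> CQ" using CQ_pos by simp
    finally show "\<bar>Q t\<bar> \<le> CQ" using Q_pos[of t] by simp
  qed
  then show ?thesis using Wq0 CQ_pos by (simp add: algebra_simps)
qed

definition beta :: real where "beta = (1 - k) / (2*k)"
definition cc :: real where "cc = - 1/4 - beta"

definition ga :: "real \<Rightarrow> real" where "ga x = - 3 * Qdd x + 3 * A1dd x + V x * A1 x"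
definition T :: "real \<Rightarrow> real" where "T x = 2 * A1d x + y1 x + 3/2 * (x * Q x) + beta * Wq x"

lemma alg_T:
  fixes q f x k :: real
  assumes k: "k > 0"
  defines "y \<equiv> q * f" and "d \<equiv> q * (k - (k+1) * f^2)" and "vv \<equiv> (2*k+1)*(k+1)*(1 - f^2)"
  shows "2 * (- d / (2*k) - 3 * d - 3/2 * (x * ((1 - vv) * y))) + d + 3/2 * (q + x * (- y)) + (1 - k) / (2*k) * q
    = - 3 * (q * f ^ 2 - q * (k * (1 - f ^ 2))) + 3 * (- d / (2*k) - 3 * d - 3/2 * (x * ((1 - vv) * y)))
      + vv * (q / (2*k) - 3/2 * (x * y))"
  unfolding y_def d_def vv_def using k by (simp add: field_simps power2_eq_square)

lemma T_deriv: "(T has_real_derivative ga x) (at x)"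
proof -
  have "(T has_real_derivative 2 * A1dd x + d1 x + 3/2 * (Q x + x * (- (Q x * ph x))) + beta * Q x) (at x)"
    unfolding T_def[abs_def]
    by (intro DERIV_add DERIV_cmult A1d_deriv y1_deriv x_mult_deriv Q_deriv Wq_deriv)
  moreover have "2 * A1dd x + d1 x + 3/2 * (Q x + x * (- (Q x * ph x))) + beta * Q x = ga x"
    unfolding ga_def Qdd_def A1dd_def A1_def L_y1 y1_def d1_def V_alt beta_def
    using alg_T[OF k_pos, of "Q x" "ph x" x] by simp
  ultimately show ?thesis by simp
qed

lemma T0: "T 0 = 0" unfolding T_def A1d_def y1_def by (simp add: Wq0 ph0)

definition D1 :: "real \<Rightarrow> real" where
  "D1 x = 3/2 * (x * y1 x ^ 2) + 3/4 * (x * Q x ^ 2) + beta * (Q x * Wq x) - Q x * y1 x / (2*k)"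
definition D1d :: "real \<Rightarrow> real" where
  "D1d x = (- y1 x) * T x - cc * Q x ^ 2"

lemma alg_D1:
  fixes q f x w k b :: real
  assumes k: "k > 0" and b: "b = (1 - k) / (2*k)"
  defines "y \<equiv> q * f" and "d \<equiv> q * (k - (k+1) * f^2)"
  shows "3/2 * ((y^2) + x * (2 * y * d)) + 3/4 * (q^2 + x * (2 * q * (- y))) + b * ((- y) * w + q * q)
      - ((- y) * y + q * d) / (2*k)
    = (- y) * (2 * (- y / (2*k) - 3/2 * y - 3/2 * (x * d)) + y + 3/2 * (x * q) + b * w) - (- 1/4 - b) * q^2"
  unfolding y_def d_def b using k by (simp add: field_simps power2_eq_square)

lemma D1_deriv: "(D1 has_real_derivative D1d x) (at x)"
proof -
  have dy2: "((\<lambda>x. y1 x ^ 2) has_real_derivative 2 * y1 x * d1 x) (at x)"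
    using DERIV_power[OF y1_deriv, of 2] by (simp add: algebra_simps)
  have dq2: "((\<lambda>x. Q x ^ 2) has_real_derivative 2 * Q x * (- (Q x * ph x))) (at x)"
    using DERIV_power[OF Q_deriv, of 2] by (simp add: algebra_simps)
  have dqw: "((\<lambda>x. Q x * Wq x) has_real_derivative (- (Q x * ph x)) * Wq x + Q x * Q x) (at x)"
    using DERIV_mult'[OF Q_deriv Wq_deriv] by (simp add: algebra_simps)
  have dqy: "((\<lambda>x. Q x * y1 x) has_real_derivative (- (Q x * ph x)) * y1 x + Q x * d1 x) (at x)"
    using DERIV_mult'[OF Q_deriv y1_deriv] by (simp add: algebra_simps)
  have "(D1 has_real_derivative
      3/2 * ((y1 x ^ 2) + x * (2 * y1 x * d1 x)) + 3/4 * (Q x ^ 2 + x * (2 * Q x * (- (Q x * ph x))))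
      + beta * ((- (Q x * ph x)) * Wq x + Q x * Q x)
      - ((- (Q x * ph x)) * y1 x + Q x * d1 x) / (2*k)) (at x)"
    unfolding D1_def[abs_def]
    by (intro DERIV_add DERIV_diff DERIV_cmult DERIV_cdivide x_mult_deriv dy2 dq2 dqw dqy)
  moreover have "3/2 * ((y1 x ^ 2) + x * (2 * y1 x * d1 x)) + 3/4 * (Q x ^ 2 + x * (2 * Q x * (- (Q x * ph x))))
      + beta * ((- (Q x * ph x)) * Wq x + Q x * Q x)
      - ((- (Q x * ph x)) * y1 x + Q x * d1 x) / (2*k) = D1d x"
    unfolding D1d_def T_def A1d_def cc_def y1_def d1_def
    using alg_D1[OF k_pos beta_def, of "Q x" "ph x" x "Wq x"] by simp
  ultimately show ?thesis by simp
qed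

definition ph2d :: "real \<Rightarrow> real" where "ph2d x = - 2 * k^2 * ph x * (1 - ph x ^ 2)"
lemma ph1_deriv: "((\<lambda>x. k * (1 - ph x ^ 2)) has_real_derivative ph2d x) (at x)"
  unfolding ph2d_def by (auto intro!: derivative_eq_intros ph_deriv simp: algebra_simps power2_eq_square)

definition Lphi :: "real \<Rightarrow> real" where "Lphi x = ph x - ph2d x - V x * ph x"
definition D2 :: "real \<Rightarrow> real" where "D2 x = (- (Q x * ph x)) * (k * (1 - ph x ^ 2)) - ph x * Qdd x"

lemma D2_deriv: "(D2 has_real_derivative y1 x * Lphi x) (at x)"
proof -
  have Qdd_deriv: "(Qdd has_real_derivative - (Q x * ph x) + Q x * ph x * (k+1) * (1 - ph x^2) * (2*k+1)) (at x)"
  proof -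
    have "(Qdd has_real_derivative (- (Q x * ph x)) * ph x ^ 2 + Q x * (2 * ph x * (k * (1 - ph x ^ 2)))
        - ((- (Q x * ph x)) * (k * (1 - ph x ^ 2)) + Q x * (k * (- (2 * ph x * (k * (1 - ph x ^ 2))))))) (at x)"
      unfolding Qdd_def[abs_def] by (auto intro!: derivative_eq_intros Q_deriv ph_deriv)
    then show ?thesis by (simp add: algebra_simps power2_eq_square)
  qed
  have "(D2 has_real_derivative Qdd x * (k * (1 - ph x ^ 2)) + (- (Q x * ph x)) * ph2d x
      - (k * (1 - ph x ^ 2) * Qdd x + ph x * (- (Q x * ph x) + Q x * ph x * (k+1) * (1 - ph x^2) * (2*k+1)))) (at x)"
    unfolding D2_def[abs_def] by (auto intro!: derivative_eq_intros Q_deriv ph1_deriv ph_deriv Qdd_deriv simp: ph2d_def Qdd_def algebra_simps power2_eq_square)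
  moreover have "Qdd x * (k * (1 - ph x ^ 2)) + (- (Q x * ph x)) * ph2d x
      - (k * (1 - ph x ^ 2) * Qdd x + ph x * (- (Q x * ph x) + Q x * ph x * (k+1) * (1 - ph x^2) * (2*k+1))) = y1 x * Lphi x"
    unfolding y1_def Lphi_def V_alt ph2d_def by (simp add: algebra_simps power2_eq_square)
  ultimately show ?thesis by simp
qed

end


lemma PB_bdd: "(\<And>x. \<bar>f x\<bar> \<le> C) \<Longrightarrow> PB f"
  unfolding PB_def by (rule exI[of _ C], rule exI[of _ 0]) simp

lemma PB_id: "PB (\<lambda>x::real. x)"
  unfolding PB_def by (rule exI[of _ 1], rule exI[of _ 1]) simp

context sol
begin

lemma k_le: "k \<le> 3/2" using p unfolding k_def by auto

lemma cc_nz: "cc \<noteq> 0"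
proof
  assume "cc = 0"
  then have "-1/4 = (1-k)/(2*k)" unfolding cc_def beta_def by simp
  then have "k = 2" using k_pos by (simp add: field_simps)
  then show False using k_le by simp
qed

lemma YB_y1: "YB y1" unfolding YB_def using y1_bnd by (intro exI[of _ CQ] exI[of _ 0]) simp
lemma PB_y1: "PB y1" using YB_PB[OF YB_y1] .
lemma PB_Q: "PB Q" using YB_PB[OF YB_Q] .
lemma PB_ph: "PB ph" by (rule PB_bdd[OF ph_le])
lemma PB_Wq: "PB Wq" unfolding PB_def using Wq_bnd by (intro exI[of _ CQ] exI[of _ 1]) simp

lemma YB_D1: "YB D1"
proof -
  have a: "YB (\<lambda>x. 3/2 * (x * y1 x ^ 2))"
    using YB_cmult[OF YB_mult[OF YB_mult[OF YB_y1 PB_y1] PB_id], of "3/2"] by (simp add: algebra_simps power2_eq_square)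
  have b: "YB (\<lambda>x. 3/4 * (x * Q x ^ 2))"
    using YB_cmult[OF YB_mult[OF YB_mult[OF YB_Q PB_Q] PB_id], of "3/4"] by (simp add: algebra_simps power2_eq_square)
  have c: "YB (\<lambda>x. beta * (Q x * Wq x))" using YB_cmult[OF YB_mult[OF YB_Q PB_Wq]] .
  have d: "YB (\<lambda>x. Q x * y1 x / (2*k))" using YB_cmult[OF YB_mult[OF YB_Q PB_y1], of "1/(2*k)"] by simp
  show ?thesis unfolding D1_def[abs_def] by (rule YB_diff[OF YB_add[OF YB_add[OF a b] c] d])
qed

lemma YB_D2: "YB D2"
proof -
  have s1: "PB (\<lambda>x. k * (1 - ph x ^ 2))" by (rule PB_bdd[of _ k]) (use s_pos ph_le k_pos in \<open>auto simp: abs_mult abs_square_le_1 less_imp_le\<close>)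
  have a: "YB (\<lambda>x. (- (Q x * ph x)) * (k * (1 - ph x ^ 2)))"
    using YB_mult[OF YB_minus[OF YB_y1] s1] unfolding y1_def .
  have q: "PB (\<lambda>x. ph x ^ 2 - k * (1 - ph x ^ 2))"
  proof (rule PB_bdd[of _ "1 + k"])
    fix x
    have "ph x ^ 2 \<le> 1" using ph_le[of x] by (simp add: abs_square_le_1)
    moreover have "0 \<le> k * (1 - ph x ^ 2)" "k * (1 - ph x ^ 2) \<le> k * 1" using s_pos[of x] k_pos
      by (auto intro: mult_left_mono)
    moreover have "0 \<le> ph x ^ 2" by simp
    ultimately show "\<bar>ph x ^ 2 - k * (1 - ph x ^ 2)\<bar> \<le> 1 + k" unfolding abs_le_iff by linarith
  qed
  have "YB (\<lambda>x. Q x * (ph x ^ 2 - k * (1 - ph x ^ 2)))" by (rule YB_mult[OF YB_Q q])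
  then have b: "YB Qdd" unfolding Qdd_def[abs_def] by (simp add: algebra_simps)
  have c: "YB (\<lambda>x. ph x * Qdd x)" using YB_mult[OF b PB_ph] by (simp add: mult.commute)
  show ?thesis unfolding D2_def[abs_def] by (rule YB_diff[OF a c])
qed

lemma coef:
  "\<exists>G Lp Lm. (\<forall>x. (G has_real_derivative y1 x * (T x - l * Lphi x)) (at x)) \<and>
      (G \<longlongrightarrow> Lp) at_top \<and> (G \<longlongrightarrow> Lm) at_bot \<and> Lp \<noteq> Lm"
proof -
  have YQ2: "YB (\<lambda>x. Q x ^ 2)" using YB_mult[OF YB_Q PB_Q] by (simp add: power2_eq_square)
  have cQ2: "continuous_on UNIV (\<lambda>x. Q x ^ 2)" by (intro continuous_intros Dif_cont Dif_Q)
  obtain W Lp2 Lm2 where W: "\<And>x. (W has_real_derivative Q x ^ 2) (at x)" and W0: "W 0 = 0"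
    and WL: "(W \<longlongrightarrow> Lp2) at_top" "(W \<longlongrightarrow> Lm2) at_bot"
    using lim_exists[OF YQ2 cQ2] by blast
  have mono: "W a < W b" if "a < b" for a b
    by (rule DERIV_pos_imp_increasing[OF that]) (meson W Q_pos zero_less_power)
  have "Lp2 \<ge> W 1"
  proof (rule tendsto_lowerbound[OF WL(1)])
    show "eventually (\<lambda>x. W 1 \<le> W x) at_top"
      by (rule eventually_mono[OF eventually_ge_at_top[of 1]]) (use mono in \<open>fastforce simp: le_less\<close>)
  qed simp
  moreover have "Lm2 \<le> W (-1)"
  proof (rule tendsto_upperbound[OF WL(2)])
    show "eventually (\<lambda>x. W x \<le> W (-1)) at_bot"
      by (rule eventually_mono[OF eventually_le_at_bot[of "-1"]]) (use mono in \<open>fastforce simp: le_less\<close>)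
  qed simp
  moreover have "W (-1) < W 1" by (rule mono) simp
  ultimately have Lgt: "Lm2 < Lp2" by simp
  define G where "G x = - cc * W x - D1 x - l * D2 x" for x
  have dG: "(G has_real_derivative y1 x * (T x - l * Lphi x)) (at x)" for x
  proof -
    have "(G has_real_derivative - cc * Q x ^ 2 - D1d x - l * (y1 x * Lphi x)) (at x)"
      unfolding G_def[abs_def] by (intro DERIV_diff DERIV_cmult W D1_deriv D2_deriv)
    then show ?thesis unfolding D1d_def by (simp add: algebra_simps)
  qed
  have lt: "(G \<longlongrightarrow> - cc * Lp2 - 0 - l * 0) at_top"
    unfolding G_def[abs_def] by (intro tendsto_diff tendsto_mult tendsto_const WL YB_tendsto0 YB_D1 YB_D2)
  have lb: "(G \<longlongrightarrow> - cc * Lm2 - 0 - l * 0) at_bot"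
    unfolding G_def[abs_def] by (intro tendsto_diff tendsto_mult tendsto_const WL YB_tendsto0 YB_D1 YB_D2)
  have "- cc * Lp2 - 0 - l * 0 \<noteq> - cc * Lm2 - 0 - l * 0" using cc_nz Lgt by simp
  then show ?thesis using dG lt lb by blast
qed

end


lemma deriv2_eq:
  assumes "\<And>x. (f has_real_derivative f1 x) (at x)" "\<And>x. (f1 has_real_derivative f2 x) (at x)"
  shows "deriv (deriv f) = f2"
proof -
  have "deriv f = f1" by (rule deriv_eqI, rule assms(1))
  then show ?thesis using deriv_eqI[OF assms(2)] by simp
qed

lemma Yc_DERIV: "Yc f \<Longrightarrow> (f has_real_derivative deriv f x) (at x)"
  using Dif_D[OF Yc_Dif] by blast

lemma deg_lemma:
  fixes X Y Z :: "real poly"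
  assumes "degree Y \<le> 1 + degree Z"
  shows "degree (pint (X + smult 3 (pderiv (pderiv Y)))) \<le> max (1 + degree X) (degree Z)"
proof (cases "pderiv (pderiv Y) = 0")
  case True
  then show ?thesis using degree_pint[of X] by simp
next
  case False
  have dY: "degree (pderiv (pderiv Y)) = degree Y - 2" by (simp add: degree_pderiv)
  have "degree Y \<ge> 2"
  proof (rule ccontr)
    assume "\<not> degree Y \<ge> 2"
    then have "degree (pderiv Y) = 0" by (simp add: degree_pderiv)
    then have "pderiv (pderiv Y) = 0" using pderiv_eq_0_iff by blast
    with False show False by simp
  qed
  have "degree (X + smult 3 (pderiv (pderiv Y))) \<le> max (degree X) (degree (pderiv (pderiv Y)))"
    using degree_add_le_max[of X "smult 3 (pderiv (pderiv Y))"] by simp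
  then have "degree (pint (X + smult 3 (pderiv (pderiv Y)))) \<le> max (degree X) (degree Y - 2) + 1"
    using degree_pint[of "X + smult 3 (pderiv (pderiv Y))"] dY by linarith
  then show ?thesis using assms \<open>degree Y \<ge> 2\<close> by linarith
qed

lemma even_poly_add: "even_fun (poly P) \<Longrightarrow> even_fun (poly Q) \<Longrightarrow> even_fun (poly (P + Q))"
  unfolding even_fun_def by simp
lemma odd_poly_add: "odd_fun (poly P) \<Longrightarrow> odd_fun (poly Q) \<Longrightarrow> odd_fun (poly (P + Q))"
  unfolding odd_fun_def by simp
lemma even_poly_smult: "even_fun (poly P) \<Longrightarrow> even_fun (poly (smult c P))"
  unfolding even_fun_def by simp
lemma odd_poly_smult: "odd_fun (poly P) \<Longrightarrow> odd_fun (poly (smult c P))"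
  unfolding odd_fun_def by simp
lemma even_poly_const: "even_fun (poly [:c:])"
  unfolding even_fun_def by simp

context sol
begin

definition p1 :: "real \<Rightarrow> real" where "p1 x = k * (1 - ph x ^ 2)"
lemma ph_deriv': "(ph has_real_derivative p1 x) (at x)" unfolding p1_def by (rule ph_deriv)
lemma p1_deriv: "(p1 has_real_derivative ph2d x) (at x)" unfolding p1_def[abs_def] by (rule ph1_deriv)

lemma Yc_p1: "Yc p1"
  using Yc_cmult[OF Yc_s, of k] unfolding p1_def[abs_def] .
lemma Yc_ph2d: "Yc ph2d"
proof -
  have "Yc (\<lambda>x. (1 - ph x ^ 2) * poly [:0, -2*k^2:] (ph x))" by (rule Yc_sR)
  then show ?thesis unfolding ph2d_def[abs_def] by (rule Yc_cong) (simp add: algebra_simps)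
qed
lemma Yc_Vph: "Yc (\<lambda>x. V x * ph x)"
proof -
  have "Yc (\<lambda>x. (1 - ph x ^ 2) * poly [:0, (2*k+1)*(k+1):] (ph x))" by (rule Yc_sR)
  then show ?thesis by (rule Yc_cong) (simp add: V_alt algebra_simps)
qed
lemma Yc_Qdd: "Yc Qdd"
proof -
  have "Yc (\<lambda>x. Q x * poly [:-k, 0, 1+k:] (ph x))" by (rule Yc_QR)
  then show ?thesis unfolding Qdd_def[abs_def] by (rule Yc_cong) (simp add: algebra_simps power2_eq_square)
qed
lemma A1dd_eq: "deriv (deriv A1) = A1dd" by (rule deriv2_eq[OF A1_deriv A1d_deriv])
lemma Yc_A1dd: "Yc A1dd" using Yc_deriv[OF Yc_deriv[OF Yc_A1]] unfolding A1dd_eq .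

lemma p1_even: "p1 (-x) = p1 x" unfolding p1_def ph_minus by simp
lemma ph2d_odd: "ph2d (-x) = - ph2d x" unfolding ph2d_def ph_minus by simp
lemma Qdd_even: "Qdd (-x) = Qdd x" unfolding Qdd_def ph_minus Q_minus by simp
lemma d1_even: "d1 (-x) = d1 x" unfolding d1_def ph_minus Q_minus by simp
lemma dd1_odd: "dd1 (-x) = - dd1 x" unfolding L_y1 V_even y1_odd by simp
lemma A1dd_even: "A1dd (-x) = A1dd x" unfolding A1dd_def d1_even dd1_odd by simp
lemma Qd_eq: "deriv Q = (\<lambda>x. - (Q x * ph x))" by (rule deriv_Q)
lemma Qdd_eq: "deriv (deriv Q) = Qdd" by (rule deriv2_eq[OF Q_deriv Qd_deriv])

end


context sol
begin

lemma Yc_y1: "Yc y1"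
  using Yc_QR[of "[:0,1:]"] unfolding y1_def[abs_def] by simp

theorem main:
  fixes F G Fbar Gbar :: "real \<Rightarrow> real"
    and Ft Fh Gt Gh :: "real poly"
  assumes F: "F = (\<lambda>x. Fbar x + poly Ft x + phi p x * poly Fh x)"
    and G: "G = (\<lambda>x. Gbar x + poly Gt x + phi p x * poly Gh x)"
    and Fbar: "classY Fbar" "odd_fun Fbar"
    and Gbar: "classY Gbar" "even_fun Gbar"
    and Ft: "odd_fun (poly Ft)" and Gh: "odd_fun (poly Gh)"
    and Fh: "even_fun (poly Fh)" and Gt: "even_fun (poly Gt)"
  shows "\<exists>(a::real) Abar Bbar (At::real poly) Ah Bt Bh.
    classY Abar \<and> classY Bbar \<and> even_fun Abar \<and> odd_fun Bbar \<and>
    even_fun (poly At) \<and> even_fun (poly Bh) \<and>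
    odd_fun (poly Ah) \<and> odd_fun (poly Bt) \<and>
    (let A = (\<lambda>x. Abar x + poly At x + phi p x * poly Ah x);
         B = (\<lambda>x. Bbar x + poly Bt x + phi p x * poly Bh x)
     in (\<forall>x. deriv (Lop p A) x
              + a * deriv (\<lambda>y. 3 * Qp p y - 2 * (Qp p y) ^ p) x = F x) \<and>
        (\<forall>x. deriv (Lop p B) x + 3 * a * deriv (deriv (Qp p)) x
              - 3 * deriv (deriv A) x - real p * (Qp p x) ^ (p - 1) * A x = G x)) \<and>
    degree At \<le> 1 + degree Ft \<and>
    degree Bt \<le> max (1 + degree Gt) (degree Ft) \<and>
    degree Ah \<le> 1 + degree Fh \<and>
    degree Bh \<le> max (1 + degree Gh) (degree Fh) \<and>
    (Ft = 0 \<longrightarrow> At = 0) \<and>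
    (Fh = 0 \<longrightarrow> Ah = 0) \<and>
    (pderiv (pderiv At) = 0 \<and> Gt = 0 \<longrightarrow> Bt = 0) \<and>
    (pderiv (pderiv Ah) = 0 \<and> Gh = 0 \<longrightarrow> degree Bh = 0)"
proof -
  have YF: "Yc Fbar" using Fbar(1) classY_Yc by blast
  have YG: "Yc Gbar" using Gbar(1) classY_Yc by blast
  have Fo: "Fbar (-x) = - Fbar x" for x using Fbar(2) unfolding odd_fun_def by blast
  have Ge: "Gbar (-x) = Gbar x" for x using Gbar(2) unfolding even_fun_def by blast
  define Pt where "Pt = pint Ft"
  define At where "At = psolve Pt"
  define Ph where "Ph = pint Fh"
  define Ah where "Ah = psolve Ph"
  have eqAt: "poly At x - poly (pderiv (pderiv At)) x = poly Pt x" for x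
    unfolding At_def using psolve_eq[of Pt] by (metis poly_diff)
  have eqAh: "poly Ah x - poly (pderiv (pderiv Ah)) x = poly Ph x" for x
    unfolding Ah_def using psolve_eq[of Ph] by (metis poly_diff)
  have Pt_ev: "even_fun (poly Pt)" unfolding Pt_def by (rule pint_odd[OF Ft])
  have At_ev: "even_fun (poly At)" unfolding At_def by (rule psolve_even[OF Pt_ev])
  have Ph_od: "odd_fun (poly Ph)" unfolding Ph_def by (rule pint_even[OF Fh])
  have Ah_od: "odd_fun (poly Ah)" unfolding Ah_def by (rule psolve_odd[OF Ph_od])
  have At1_od: "odd_fun (poly (pderiv At))" by (rule poly_even_pderiv[OF At_ev])
  have At2_ev: "even_fun (poly (pderiv (pderiv At)))" by (rule poly_odd_pderiv[OF At1_od])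
  have Ah1_ev: "even_fun (poly (pderiv Ah))" by (rule poly_odd_pderiv[OF Ah_od])
  have Ah2_od: "odd_fun (poly (pderiv (pderiv Ah)))" by (rule poly_even_pderiv[OF Ah1_ev])
  have pe: "poly At (-x) = poly At x" "poly (pderiv At) (-x) = - poly (pderiv At) x"
     "poly (pderiv (pderiv At)) (-x) = poly (pderiv (pderiv At)) x"
     "poly Ah (-x) = - poly Ah x" "poly (pderiv Ah) (-x) = poly (pderiv Ah) x"
     "poly (pderiv (pderiv Ah)) (-x) = - poly (pderiv (pderiv Ah)) x"
     "poly Ph (-x) = - poly Ph x" "poly Pt (-x) = poly Pt x" for x
    using At_ev At1_od At2_ev Ah_od Ah1_ev Ah2_od Ph_od Pt_ev unfolding even_fun_def odd_fun_def by auto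
  define g1 where "g1 x = Fbar x - p1 x * poly Ph x" for x
  have Yg1: "Yc g1" unfolding g1_def[abs_def] by (rule Yc_diff[OF YF Yc_mult[OF Yc_p1 Pc_poly]])
  have g1o: "g1 (-x) = - g1 x" for x unfolding g1_def Fo p1_even pe by simp
  obtain w1 where w1: "Yc w1" "\<And>x. w1 (-x) = w1 x" "\<And>x. (w1 has_real_derivative g1 x) (at x)"
    using Int_odd[OF Yg1 g1o] by blast
  define E1 where "E1 x = ph2d x * poly Ah x + 2 * p1 x * poly (pderiv Ah) x + V x * ph x * poly Ah x" for x
  define h1 where "h1 x = w1 x + V x * poly At x + E1 x" for x
  have Yh1: "Yc h1"
  proof -
    have "Yc (\<lambda>x. w1 x + V x * poly At x + (ph2d x * poly Ah x + 2 * (p1 x * poly (pderiv Ah) x) + (V x * ph x) * poly Ah x))"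
      by (intro Yc_add Yc_cmult Yc_mult w1(1) Yc_V Pc_poly Yc_ph2d Yc_p1 Yc_Vph)
    then show ?thesis unfolding h1_def[abs_def] E1_def by (rule Yc_cong) (simp add: algebra_simps)
  qed
  have h1e: "h1 (-x) = h1 x" for x
    unfolding h1_def E1_def w1(2) V_even pe ph2d_odd p1_even ph_minus by simp
  obtain A0 where A0: "Yc A0" "\<And>x. - deriv (deriv A0) x + A0 x - V x * A0 x = h1 x" "\<And>x. A0 (-x) = A0 x"
    using solve[OF Yh1 orth_even[OF Yh1 h1e]] h1e by blast
  define Rt where "Rt = pint (Gt + smult 3 (pderiv (pderiv At)))"
  define Bt where "Bt = psolve Rt"
  define Sh where "Sh = pint (Gh + smult 3 (pderiv (pderiv Ah)))"
  define Bs where "Bs = psolve Sh"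
  have eqBt: "poly Bt x - poly (pderiv (pderiv Bt)) x = poly Rt x" for x
    unfolding Bt_def using psolve_eq[of Rt] by (metis poly_diff)
  have eqBs: "poly Bs x - poly (pderiv (pderiv Bs)) x = poly Sh x" for x
    unfolding Bs_def using psolve_eq[of Sh] by (metis poly_diff)
  have Rt_od: "odd_fun (poly Rt)" unfolding Rt_def
    by (intro pint_even even_poly_add Gt even_poly_smult At2_ev)
  have Bt_od: "odd_fun (poly Bt)" unfolding Bt_def by (rule psolve_odd[OF Rt_od])
  have Sh_ev: "even_fun (poly Sh)" unfolding Sh_def
    by (intro pint_odd odd_poly_add Gh odd_poly_smult Ah2_od)
  have Bs_ev: "even_fun (poly Bs)" unfolding Bs_def by (rule psolve_even[OF Sh_ev])
  have Bs1_od: "odd_fun (poly (pderiv Bs))" by (rule poly_even_pderiv[OF Bs_ev])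
  have pe2: "poly Bt (-x) = - poly Bt x" "poly Bs (-x) = poly Bs x" "poly (pderiv Bs) (-x) = - poly (pderiv Bs) x"
     "poly Sh (-x) = poly Sh x" for x
    using Bt_od Bs_ev Bs1_od Sh_ev unfolding even_fun_def odd_fun_def by auto
  define g20 where "g20 x = Gbar x + 3 * deriv (deriv A0) x + 3 * (ph2d x * poly Ah x) + 6 * (p1 x * poly (pderiv Ah) x)
      + V x * (A0 x + poly At x + ph x * poly Ah x) - p1 x * poly Sh x" for x
  have YA0'': "Yc (deriv (deriv A0))" by (rule Yc_deriv[OF Yc_deriv[OF A0(1)]])
  have A0''e: "deriv (deriv A0) (-x) = deriv (deriv A0) x" for x
  proof -
    have "\<And>x. deriv A0 (-x) = - deriv A0 x" by (rule deriv_even_odd[OF Yc_Dif[OF A0(1)] A0(3)])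
    then show ?thesis by (rule deriv_odd_even[OF Yc_Dif[OF Yc_deriv[OF A0(1)]]])
  qed
  have Yg20: "Yc g20"
  proof -
    have "Yc (\<lambda>x. Gbar x + 3 * deriv (deriv A0) x + 3 * (ph2d x * poly Ah x) + 6 * (p1 x * poly (pderiv Ah) x)
      + (V x * A0 x + V x * poly At x + (V x * ph x) * poly Ah x) - p1 x * poly Sh x)"
      by (intro Yc_add Yc_diff Yc_cmult Yc_mult YG YA0'' Yc_ph2d Yc_p1 Yc_Vph Yc_V Pc_poly Yc_Pc[OF A0(1)])
    then show ?thesis unfolding g20_def[abs_def] by (rule Yc_cong) (simp add: algebra_simps)
  qed
  have g20e: "g20 (-x) = g20 x" for x
    unfolding g20_def Ge A0''e V_even pe pe2 ph2d_odd p1_even ph_minus A0(3) by simp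
  obtain w20 l0 where w20: "Yc w20" "\<And>x. w20 (-x) = - w20 x"
     "\<And>x. (w20 has_real_derivative g20 x - l0 * (k * (1 - ph x ^ 2))) (at x)"
    using Int_even[OF Yg20 g20e] by blast
  have Yga: "Yc ga"
  proof -
    have "Yc (\<lambda>x. - 3 * Qdd x + 3 * A1dd x + V x * A1 x)"
      by (intro Yc_add Yc_cmult Yc_mult Yc_Qdd Yc_A1dd Yc_V Yc_Pc[OF Yc_A1])
    then show ?thesis unfolding ga_def[abs_def] .
  qed
  have gae: "ga (-x) = ga x" for x unfolding ga_def Qdd_even A1dd_even V_even A1_even ..
  obtain w2a la where w2a: "Yc w2a" "\<And>x. w2a (-x) = - w2a x"
     "\<And>x. (w2a has_real_derivative ga x - la * (k * (1 - ph x ^ 2))) (at x)"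
    using Int_even[OF Yga gae] by blast
  have w2aT: "w2a x + la * ph x = T x" for x
  proof -
    have "\<forall>x. ((\<lambda>x. w2a x + la * ph x - T x) has_real_derivative 0) (at x)"
    proof
      fix x
      have "((\<lambda>x. w2a x + la * ph x - T x) has_real_derivative (ga x - la * (k * (1 - ph x ^ 2))) + la * (k * (1 - ph x ^ 2)) - ga x) (at x)"
        by (intro DERIV_diff DERIV_add DERIV_cmult w2a(3) ph_deriv T_deriv)
      then show "((\<lambda>x. w2a x + la * ph x - T x) has_real_derivative 0) (at x)" by simp
    qed
    from DERIV_isconst_all[OF this, of x 0] have "w2a x + la * ph x - T x = w2a 0 + la * ph 0 - T 0" .
    moreover have "w2a 0 = 0" using w2a(2)[of 0] by simp
    ultimately show ?thesis using T0 ph0 by simp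
  qed
  define h20 where "h20 x = w20 x + V x * poly Bt x + ph2d x * (poly Bs x + l0) + 2 * p1 x * poly (pderiv Bs) x
      + V x * ph x * (poly Bs x + l0)" for x
  define h2a where "h2a x = w2a x + la * (ph2d x + V x * ph x)" for x
  have h2aT: "h2a x = T x - la * Lphi x" for x
    unfolding h2a_def Lphi_def using w2aT[of x] by (simp add: algebra_simps)
  have Yh20: "Yc h20"
  proof -
    have "Yc (\<lambda>x. w20 x + V x * poly Bt x + (ph2d x * poly Bs x + l0 * ph2d x) + 2 * (p1 x * poly (pderiv Bs) x)
      + ((V x * ph x) * poly Bs x + l0 * (V x * ph x)))"
      by (intro Yc_add Yc_cmult Yc_mult w20(1) Yc_V Pc_poly Yc_ph2d Yc_p1 Yc_Vph)
    then show ?thesis unfolding h20_def[abs_def] by (rule Yc_cong) (simp add: algebra_simps)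
  qed
  have Yh2a: "Yc h2a"
    unfolding h2a_def[abs_def] by (intro Yc_add Yc_cmult w2a(1) Yc_ph2d Yc_Vph)
  have h20o: "h20 (-x) = - h20 x" for x
    unfolding h20_def w20(2) V_even pe2 ph2d_odd p1_even ph_minus by (simp add: algebra_simps)
  have h2ao: "h2a (-x) = - h2a x" for x
    unfolding h2a_def w2a(2) V_even ph2d_odd ph_minus by (simp add: algebra_simps)
  have Yy1h20: "Yc (\<lambda>x. y1 x * h20 x)" by (rule Yc_mult[OF Yc_y1 Yc_Pc[OF Yh20]])
  obtain G0 Lp0 Lm0 where G0: "\<And>x. (G0 has_real_derivative y1 x * h20 x) (at x)"
      "(G0 \<longlongrightarrow> Lp0) at_top" "(G0 \<longlongrightarrow> Lm0) at_bot"
    using lim_exists[OF Yc_YB[OF Yy1h20] Dif_cont[OF Yc_Dif[OF Yy1h20]]] by blast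
  obtain Ga Lpa Lma where Ga: "\<And>x. (Ga has_real_derivative y1 x * (T x - la * Lphi x)) (at x)"
      "(Ga \<longlongrightarrow> Lpa) at_top" "(Ga \<longlongrightarrow> Lma) at_bot" "Lpa \<noteq> Lma"
    using coef[of la] by blast
  define a where "a = - (Lp0 - Lm0) / (Lpa - Lma)"
  define h2 where "h2 x = h20 x + a * h2a x" for x
  have Yh2: "Yc h2" unfolding h2_def[abs_def] by (intro Yc_add Yc_cmult Yh20 Yh2a)
  have h2o: "h2 (-x) = - h2 x" for x unfolding h2_def h20o h2ao by simp
  have orth2: "\<exists>G L. (\<forall>x. (G has_real_derivative y1 x * h2 x) (at x)) \<and> (G \<longlongrightarrow> L) at_top \<and> (G \<longlongrightarrow> L) at_bot"
  proof (intro exI conjI allI)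
    fix x
    show "((\<lambda>x. G0 x + a * Ga x) has_real_derivative y1 x * h2 x) (at x)"
      using DERIV_add[OF G0(1) DERIV_cmult[OF Ga(1)]] unfolding h2_def h2aT by (simp add: algebra_simps)
  next
    show "((\<lambda>x. G0 x + a * Ga x) \<longlongrightarrow> Lp0 + a * Lpa) at_top" by (intro tendsto_intros G0 Ga)
  next
    have "Lm0 + a * Lma = Lp0 + a * Lpa" unfolding a_def using Ga(4) by (simp add: field_simps)
    moreover have "((\<lambda>x. G0 x + a * Ga x) \<longlongrightarrow> Lm0 + a * Lma) at_bot"
      by (rule tendsto_add[OF G0(3) tendsto_mult[OF tendsto_const Ga(3)]])
    ultimately show "((\<lambda>x. G0 x + a * Ga x) \<longlongrightarrow> Lp0 + a * Lpa) at_bot" by simp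
  qed
  obtain Bbar where Bbar: "Yc Bbar" "\<And>x. - deriv (deriv Bbar) x + Bbar x - V x * Bbar x = h2 x" "\<And>x. Bbar (-x) = - Bbar x"
    using solve[OF Yh2 orth2] h2o by blast
  define Abar where "Abar x = A0 x + a * A1 x" for x
  define Bh where "Bh = Bs + [:l0 + a * la:]"
  have YAbar: "Yc Abar" unfolding Abar_def[abs_def] by (intro Yc_add Yc_cmult A0(1) Yc_A1)
  have Abar_e: "Abar (-x) = Abar x" for x unfolding Abar_def A0(3) A1_even ..
  have dA0: "(A0 has_real_derivative deriv A0 x) (at x)" for x by (rule Yc_DERIV[OF A0(1)])
  have dA0': "(deriv A0 has_real_derivative deriv (deriv A0) x) (at x)" for x by (rule Yc_DERIV[OF Yc_deriv[OF A0(1)]])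
  define A where "A x = Abar x + poly At x + ph x * poly Ah x" for x
  define A1f where "A1f x = (deriv A0 x + a * A1d x) + poly (pderiv At) x + (ph x * poly (pderiv Ah) x + p1 x * poly Ah x)" for x
  define A2f where "A2f x = (deriv (deriv A0) x + a * A1dd x) + poly (pderiv (pderiv At)) x
      + ((ph x * poly (pderiv (pderiv Ah)) x + p1 x * poly (pderiv Ah) x) + (p1 x * poly (pderiv Ah) x + ph2d x * poly Ah x))" for x
  have dA: "(A has_real_derivative A1f x) (at x)" for x
    unfolding A_def[abs_def] A1f_def Abar_def
    by (intro DERIV_add DERIV_cmult dA0 A1_deriv poly_DERIV DERIV_mult'[OF ph_deriv' poly_DERIV])
  have dA1: "(A1f has_real_derivative A2f x) (at x)" for x
    unfolding A1f_def[abs_def] A2f_def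
    by (intro DERIV_add DERIV_cmult dA0' A1d_deriv poly_DERIV DERIV_mult'[OF ph_deriv' poly_DERIV] DERIV_mult'[OF p1_deriv poly_DERIV])
  have ddA: "deriv (deriv A) = A2f" by (rule deriv2_eq[OF dA dA1])
  define Phi1 where "Phi1 x = w1 x + poly Pt x + ph x * poly Ph x - a * (3 * Q x - 2 * Q x ^ p)" for x
  have LopA: "Lop p A = Phi1"
  proof (rule ext)
    fix x
    have e1: "deriv (deriv A0) x = A0 x - V x * A0 x - h1 x" using A0(2)[of x] by simp
    have e2: "A1dd x = A1 x - V x * A1 x + (3 * Q x - 2 * Q x ^ p)" using L_A1[of x] by simp
    have e3: "poly (pderiv (pderiv At)) x = poly At x - poly Pt x" using eqAt[of x] by simp
    have e4: "poly (pderiv (pderiv Ah)) x = poly Ah x - poly Ph x" using eqAh[of x] by simp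
    have "Lop p A x = - A2f x + A x - V x * A x" unfolding Lop_def ddA V_def by simp
    also have "\<dots> = Phi1 x"
      unfolding A2f_def e1 e2 e3 e4 A_def Abar_def h1_def E1_def Phi1_def by (simp add: algebra_simps)
    finally show "Lop p A x = Phi1 x" .
  qed
  have dPhi1: "(Phi1 has_real_derivative g1 x + poly Ft x + (ph x * poly Fh x + p1 x * poly Ph x)
      - a * (3 * (- (Q x * ph x)) - 2 * (real p * ((- (Q x * ph x)) * Q x ^ (p - Suc 0))))) (at x)" for x
  proof -
    have dPt: "(poly Pt has_real_derivative poly Ft x) (at x)" unfolding Pt_def by (rule pint_deriv)
    have dPh: "(poly Ph has_real_derivative poly Fh x) (at x)" unfolding Ph_def by (rule pint_deriv)
    show ?thesis unfolding Phi1_def[abs_def]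
      by (intro DERIV_diff DERIV_add DERIV_cmult w1(3) dPt DERIV_mult'[OF ph_deriv' dPh] Q_deriv DERIV_power)
  qed
  have dQp: "((\<lambda>y. 3 * Qp p y - 2 * (Qp p y) ^ p) has_real_derivative
      3 * (- (Q x * ph x)) - 2 * (real p * ((- (Q x * ph x)) * Q x ^ (p - Suc 0)))) (at x)" for x
    by (intro DERIV_diff DERIV_cmult Q_deriv DERIV_power)
  have eq1: "deriv (Lop p A) x + a * deriv (\<lambda>y. 3 * Qp p y - 2 * (Qp p y) ^ p) x = F x" for x
    unfolding LopA DERIV_imp_deriv[OF dPhi1] DERIV_imp_deriv[OF dQp] F g1_def by (simp add: algebra_simps)
  have Bh_poly: "poly Bh x = poly Bs x + (l0 + a * la)" for x unfolding Bh_def by simp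
  have Bh_d: "pderiv Bh = pderiv Bs" unfolding Bh_def by (simp add: pderiv_add)
  have dBb: "(Bbar has_real_derivative deriv Bbar x) (at x)" for x by (rule Yc_DERIV[OF Bbar(1)])
  have dBb': "(deriv Bbar has_real_derivative deriv (deriv Bbar) x) (at x)" for x by (rule Yc_DERIV[OF Yc_deriv[OF Bbar(1)]])
  define B where "B x = Bbar x + poly Bt x + ph x * poly Bh x" for x
  define B1f where "B1f x = deriv Bbar x + poly (pderiv Bt) x + (ph x * poly (pderiv Bh) x + p1 x * poly Bh x)" for x
  define B2f where "B2f x = deriv (deriv Bbar) x + poly (pderiv (pderiv Bt)) x
      + ((ph x * poly (pderiv (pderiv Bh)) x + p1 x * poly (pderiv Bh) x) + (p1 x * poly (pderiv Bh) x + ph2d x * poly Bh x))" for x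
  have dB: "(B has_real_derivative B1f x) (at x)" for x
    unfolding B_def[abs_def] B1f_def
    by (intro DERIV_add dBb poly_DERIV DERIV_mult'[OF ph_deriv' poly_DERIV])
  have dB1: "(B1f has_real_derivative B2f x) (at x)" for x
    unfolding B1f_def[abs_def] B2f_def
    by (intro DERIV_add dBb' poly_DERIV DERIV_mult'[OF ph_deriv' poly_DERIV] DERIV_mult'[OF p1_deriv poly_DERIV])
  have ddB: "deriv (deriv B) = B2f" by (rule deriv2_eq[OF dB dB1])
  define Phi2 where "Phi2 x = w20 x + a * w2a x + poly Rt x + ph x * (poly Sh x + (l0 + a * la))" for x
  have LopB: "Lop p B = Phi2"
  proof (rule ext)
    fix x
    have e1: "deriv (deriv Bbar) x = Bbar x - V x * Bbar x - h2 x" using Bbar(2)[of x] by simp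
    have e3: "poly (pderiv (pderiv Bt)) x = poly Bt x - poly Rt x" using eqBt[of x] by simp
    have e4: "poly (pderiv (pderiv Bs)) x = poly Bs x - poly Sh x" using eqBs[of x] by simp
    have "Lop p B x = - B2f x + B x - V x * B x" unfolding Lop_def ddB V_def by simp
    also have "\<dots> = Phi2 x"
      unfolding B2f_def e1 Bh_d e3 e4 B_def Bh_poly h2_def h20_def h2a_def Phi2_def by (simp add: algebra_simps)
    finally show "Lop p B x = Phi2 x" .
  qed
  have dPhi2: "(Phi2 has_real_derivative (g20 x - l0 * (k * (1 - ph x ^ 2))) + a * (ga x - la * (k * (1 - ph x ^ 2)))
      + poly (Gt + smult 3 (pderiv (pderiv At))) x
      + (ph x * poly (Gh + smult 3 (pderiv (pderiv Ah))) x + p1 x * (poly Sh x + (l0 + a * la)))) (at x)" for x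
  proof -
    have dRt: "(poly Rt has_real_derivative poly (Gt + smult 3 (pderiv (pderiv At))) x) (at x)" unfolding Rt_def by (rule pint_deriv)
    have dSh: "((\<lambda>x. poly Sh x + (l0 + a * la)) has_real_derivative poly (Gh + smult 3 (pderiv (pderiv Ah))) x) (at x)"
      unfolding Sh_def using DERIV_add[OF pint_deriv[of "Gh + smult 3 (pderiv (pderiv Ah))" x] DERIV_const] by simp
    show ?thesis unfolding Phi2_def[abs_def]
      by (intro DERIV_add DERIV_cmult w20(3) w2a(3) dRt DERIV_mult'[OF ph_deriv' dSh])
  qed
  have eq2: "deriv (Lop p B) x + 3 * a * deriv (deriv (Qp p)) x
      - 3 * deriv (deriv A) x - real p * (Qp p x) ^ (p - 1) * A x = G x" for x
  proof -
    have "real p * (Qp p x) ^ (p - 1) * A x = V x * A x" unfolding V_def ..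
    then show ?thesis
      unfolding LopB DERIV_imp_deriv[OF dPhi2] Qdd_eq ddA A2f_def g20_def ga_def G A_def Abar_def p1_def
      by (simp add: algebra_simps)
  qed
  have Aeq: "(\<lambda>x. Abar x + poly At x + phi p x * poly Ah x) = A" unfolding A_def[abs_def] ..
  have Beq: "(\<lambda>x. Bbar x + poly Bt x + phi p x * poly Bh x) = B" unfolding B_def[abs_def] ..
  have degAt: "degree At \<le> 1 + degree Ft"
    using degree_psolve[of Pt] degree_pint[of Ft] unfolding At_def Pt_def by linarith
  have degAh: "degree Ah \<le> 1 + degree Fh"
    using degree_psolve[of Ph] degree_pint[of Fh] unfolding Ah_def Ph_def by linarith
  have degBt: "degree Bt \<le> max (1 + degree Gt) (degree Ft)"
    using degree_psolve[of Rt] deg_lemma[OF degAt, of Gt] unfolding Bt_def Rt_def by linarith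
  have degBh: "degree Bh \<le> max (1 + degree Gh) (degree Fh)"
  proof -
    have "degree Bh \<le> max (degree Bs) (degree [:l0 + a * la:])" unfolding Bh_def by (rule degree_add_le_max)
    then have "degree Bh \<le> degree Bs" by simp
    then show ?thesis using degree_psolve[of Sh] deg_lemma[OF degAh, of Gh] unfolding Bs_def Sh_def by linarith
  qed
  have z1: "Ft = 0 \<longrightarrow> At = 0" unfolding At_def Pt_def by (simp add: pint_zero psolve_zero)
  have z2: "Fh = 0 \<longrightarrow> Ah = 0" unfolding Ah_def Ph_def by (simp add: pint_zero psolve_zero)
  have z3: "pderiv (pderiv At) = 0 \<and> Gt = 0 \<longrightarrow> Bt = 0" unfolding Bt_def Rt_def by (simp add: pint_zero psolve_zero)
  have z4: "pderiv (pderiv Ah) = 0 \<and> Gh = 0 \<longrightarrow> degree Bh = 0" unfolding Bh_def Bs_def Sh_def by (simp add: pint_zero psolve_zero)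
  have Bh_ev: "even_fun (poly Bh)" unfolding Bh_def by (rule even_poly_add[OF Bs_ev even_poly_const])
  have parA: "even_fun Abar" unfolding even_fun_def using Abar_e by blast
  have parB: "odd_fun Bbar" unfolding odd_fun_def using Bbar(3) by blast
  have cA: "classY Abar" using YAbar classY_Yc by blast
  have cB: "classY Bbar" using Bbar(1) classY_Yc by blast
  have E1: "\<forall>x. deriv (Lop p (\<lambda>x. Abar x + poly At x + phi p x * poly Ah x)) x
              + a * deriv (\<lambda>y. 3 * Qp p y - 2 * (Qp p y) ^ p) x = F x"
    using eq1 unfolding A_def[abs_def] by blast
  have E2: "\<forall>x. deriv (Lop p (\<lambda>x. Bbar x + poly Bt x + phi p x * poly Bh x)) x + 3 * a * deriv (deriv (Qp p)) x
              - 3 * deriv (deriv (\<lambda>x. Abar x + poly At x + phi p x * poly Ah x)) x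
              - real p * (Qp p x) ^ (p - 1) * (Abar x + poly At x + phi p x * poly Ah x) = G x"
    using eq2 unfolding A_def[abs_def] B_def[abs_def] by blast
  show ?thesis
    unfolding Let_def
    by (intro exI[of _ a] exI[of _ Abar] exI[of _ Bbar] exI[of _ At] exI[of _ Ah] exI[of _ Bt] exI[of _ Bh] conjI
        cA cB parA parB At_ev Bh_ev Ah_od Bt_od E1 E2 degAt degBt degAh degBh z1 z2 z3 z4)
qed

end


theorem proposition2:
  fixes p :: nat and F G Fbar Gbar :: "real \<Rightarrow> real"
    and Ft Fh Gt Gh :: "real poly"
  assumes p: "p \<in> {2, 3, 4}"
    and F: "F = (\<lambda>x. Fbar x + poly Ft x + phi p x * poly Fh x)"
    and G: "G = (\<lambda>x. Gbar x + poly Gt x + phi p x * poly Gh x)"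
    and Fbar: "classY Fbar" "odd_fun Fbar"
    and Gbar: "classY Gbar" "even_fun Gbar"
    and Ft: "odd_fun (poly Ft)" and Gh: "odd_fun (poly Gh)"
    and Fh: "even_fun (poly Fh)" and Gt: "even_fun (poly Gt)"
  shows "\<exists>(a::real) Abar Bbar (At::real poly) Ah Bt Bh.
    classY Abar \<and> classY Bbar \<and> even_fun Abar \<and> odd_fun Bbar \<and>
    even_fun (poly At) \<and> even_fun (poly Bh) \<and>
    odd_fun (poly Ah) \<and> odd_fun (poly Bt) \<and>
    (let A = (\<lambda>x. Abar x + poly At x + phi p x * poly Ah x);
         B = (\<lambda>x. Bbar x + poly Bt x + phi p x * poly Bh x)
     in (\<forall>x. deriv (Lop p A) x
              + a * deriv (\<lambda>y. 3 * Qp p y - 2 * (Qp p y) ^ p) x = F x) \<and>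
        (\<forall>x. deriv (Lop p B) x + 3 * a * deriv (deriv (Qp p)) x
              - 3 * deriv (deriv A) x - real p * (Qp p x) ^ (p - 1) * A x = G x)) \<and>
    degree At \<le> 1 + degree Ft \<and>
    degree Bt \<le> max (1 + degree Gt) (degree Ft) \<and>
    degree Ah \<le> 1 + degree Fh \<and>
    degree Bh \<le> max (1 + degree Gh) (degree Fh) \<and>
    (Ft = 0 \<longrightarrow> At = 0) \<and>
    (Fh = 0 \<longrightarrow> Ah = 0) \<and>
    (pderiv (pderiv At) = 0 \<and> Gt = 0 \<longrightarrow> Bt = 0) \<and>
    (pderiv (pderiv Ah) = 0 \<and> Gh = 0 \<longrightarrow> degree Bh = 0)"
  proof -
  interpret sol p by unfold_locales (rule p)
  show ?thesis by (rule main[OF F G Fbar Gbar Ft Gh Fh Gt])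
qed

end
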